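(* If $A\| B$ is a left D2 algebra extension, then the extension $\lambda:A\to E:=\mathrm{End}(A_B)$ is left D2 and left balanced, and it is a left $S_{\mathrm{cop}}$-Galois extension of $\lambda(A)$ with respect to the coaction $\delta_L(g)=\sum_i\beta_i\otimes_{R^{\mathrm{op}}}\big(x\mapsto g(xt_i^1)t_i^2\big)$, $g\in E$, where $\beta_i\in S$, $t_i\in T$ is a left D2 quasibase of $A\| B$.
   Context: Algebras over a commutative ring $K$; an algebra extension $C\| D$ is a unit-preserving homomorphism $D\to C$. For $A\| B$: $R=A^B$ the centralizer, $S=\mathrm{End}({}_BA_B)$, $T=(A\otimes_BA)^B$ with Sweedler notation $t=t^1\otimes t^2$; $\lambda(a)(x)=ax$. $C\| D$ is left D2 if $C\otimes_DC$ is isomorphic as a $D$-$C$-bimodule to a direct summand of a finite direct sum $C^n$; a left D2 quasibase of $A\| B$ is a finite family $\beta_i\in S,t_i\in T$ with $a\otimes_Ba'=\sum_it_i^1\otimes t_i^2\beta_i(a)a'$. $C\| D$ is left balanced if every additive map $C\to C$ commuting with all elements of $\mathrm{End}({}_DC)$ is left multiplication by an element of the image of $D$. $S$ is a left $R$-bialgebroid with source $\lambda|_R$, target $\rho|_R$ ($\rho(r)(x)=xr$), counit $\alpha\mapsto\alpha(1)$ and comultiplication $\Delta(\alpha)=\sum_i\alpha(-t_i^1)t_i^2\otimes_R\beta_i$; its co-opposite $S_{\mathrm{cop}}$ is the left $R^{\mathrm{op}}$-bialgebroid with the same algebra, source and target exchanged and comultiplication $\Delta^{\mathrm{op}}$.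 For a left bialgebroid $S'$ over $R'$ with target $\tilde t$, a left $S'$-comodule algebra is an algebra $C$ with a homomorphism $R'\to C$ and a coassociative counital coaction $\delta:C\to S'\otimes_{R'}C$, $\delta(c)=c_{(-1)}\otimes c_{(0)}$, with $\delta(1)=1\otimes1$, $c_{(-1)}\tilde t(r)\otimes c_{(0)}=c_{(-1)}\otimes c_{(0)}r$, $\delta(cc')=\delta(c)\delta(c')$; it is left $S'$-Galois over its coinvariants $D=\{c:\delta(c)=1\otimes c\}$ if $c\otimes_Dc'\mapsto c_{(-1)}\otimes c_{(0)}c'$ is bijective. *)

theory Defs
  imports Main "HOL-Library.Function_Algebras"
begin

text \<open>An element of M \<otimes>_D N is represented by a finite list of pairs (m,n), standing for
  the formal sum of the simple tensors m \<otimes> n.  The free abelian group on M \<times> N is modelled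
  by finitely supported functions M \<times> N \<Rightarrow> int; two lists represent the same tensor iff the
  difference of their formal sums lies in the subgroup generated by the defining relations
  (biadditivity and D-balancing).\<close>

definition gen :: "'x \<Rightarrow> ('x \<Rightarrow> int)" where
  "gen p = (\<lambda>q. if q = p then 1 else 0)"

definition fsum :: "'x list \<Rightarrow> ('x \<Rightarrow> int)" where
  "fsum xs = sum_list (map gen xs)"

inductive_set zspan :: "('x \<Rightarrow> int) set \<Rightarrow> ('x \<Rightarrow> int) set" for X where
  zero: "0 \<in> zspan X"
| gen: "x \<in> X \<Longrightarrow> x \<in> zspan X"
| diff: "x \<in> zspan X \<Longrightarrow> y \<in> zspan X \<Longrightarrow> x - y \<in> zspan X"

definition tensor_rels ::
  "'m::plus set \<Rightarrow> 'n::plus set \<Rightarrow> 'd set \<Rightarrow> ('m \<Rightarrow> 'd \<Rightarrow> 'm) \<Rightarrow> ('d \<Rightarrow> 'n \<Rightarrow> 'n)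
   \<Rightarrow> ('m \<times> 'n \<Rightarrow> int) set" where
  "tensor_rels M N D ract lact =
     {gen (m + m', n) - gen (m, n) - gen (m', n) | m m' n. m \<in> M \<and> m' \<in> M \<and> n \<in> N}
   \<union> {gen (m, n + n') - gen (m, n) - gen (m, n') | m n n'. m \<in> M \<and> n \<in> N \<and> n' \<in> N}
   \<union> {gen (ract m d, n) - gen (m, lact d n) | m n d. m \<in> M \<and> n \<in> N \<and> d \<in> D}"

definition teq ::
  "'m::plus set \<Rightarrow> 'n::plus set \<Rightarrow> 'd set \<Rightarrow> ('m \<Rightarrow> 'd \<Rightarrow> 'm) \<Rightarrow> ('d \<Rightarrow> 'n \<Rightarrow> 'n)
   \<Rightarrow> ('m \<times> 'n) list \<Rightarrow> ('m \<times> 'n) list \<Rightarrow> bool" where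
  "teq M N D ract lact xs ys \<longleftrightarrow>
     set xs \<subseteq> M \<times> N \<and> set ys \<subseteq> M \<times> N \<and>
     fsum xs - fsum ys \<in> zspan (tensor_rels M N D ract lact)"

text \<open>Threefold tensor product M1 \<otimes>_D M2 \<otimes>_D M3 (canonically isomorphic to both bracketings).\<close>
definition tensor3_rels ::
  "'m1::plus set \<Rightarrow> 'm2::plus set \<Rightarrow> 'm3::plus set \<Rightarrow> 'd set
   \<Rightarrow> ('m1 \<Rightarrow> 'd \<Rightarrow> 'm1) \<Rightarrow> ('d \<Rightarrow> 'm2 \<Rightarrow> 'm2) \<Rightarrow> ('m2 \<Rightarrow> 'd \<Rightarrow> 'm2) \<Rightarrow> ('d \<Rightarrow> 'm3 \<Rightarrow> 'm3)
   \<Rightarrow> ('m1 \<times> 'm2 \<times> 'm3 \<Rightarrow> int) set" where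
  "tensor3_rels M1 M2 M3 D r1 l2 r2 l3 =
     {gen (a + a', b, c) - gen (a, b, c) - gen (a', b, c) | a a' b c.
        a \<in> M1 \<and> a' \<in> M1 \<and> b \<in> M2 \<and> c \<in> M3}
   \<union> {gen (a, b + b', c) - gen (a, b, c) - gen (a, b', c) | a b b' c.
        a \<in> M1 \<and> b \<in> M2 \<and> b' \<in> M2 \<and> c \<in> M3}
   \<union> {gen (a, b, c + c') - gen (a, b, c) - gen (a, b, c') | a b c c'.
        a \<in> M1 \<and> b \<in> M2 \<and> c \<in> M3 \<and> c' \<in> M3}
   \<union> {gen (r1 a d, b, c) - gen (a, l2 d b, c) | a b c d. a \<in> M1 \<and> b \<in> M2 \<and> c \<in> M3 \<and> d \<in> D}
   \<union> {gen (a, r2 b d, c) - gen (a, b, l3 d c) | a b c d. a \<in> M1 \<and> b \<in> M2 \<and> c \<in> M3 \<and> d \<in> D}"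

definition teq3 ::
  "'m1::plus set \<Rightarrow> 'm2::plus set \<Rightarrow> 'm3::plus set \<Rightarrow> 'd set
   \<Rightarrow> ('m1 \<Rightarrow> 'd \<Rightarrow> 'm1) \<Rightarrow> ('d \<Rightarrow> 'm2 \<Rightarrow> 'm2) \<Rightarrow> ('m2 \<Rightarrow> 'd \<Rightarrow> 'm2) \<Rightarrow> ('d \<Rightarrow> 'm3 \<Rightarrow> 'm3)
   \<Rightarrow> ('m1 \<times> 'm2 \<times> 'm3) list \<Rightarrow> ('m1 \<times> 'm2 \<times> 'm3) list \<Rightarrow> bool" where
  "teq3 M1 M2 M3 D r1 l2 r2 l3 xs ys \<longleftrightarrow>
     set xs \<subseteq> M1 \<times> M2 \<times> M3 \<and> set ys \<subseteq> M1 \<times> M2 \<times> M3 \<and>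
     fsum xs - fsum ys \<in> zspan (tensor3_rels M1 M2 M3 D r1 l2 r2 l3)"

section \<open>Algebra extensions C | D (C given by a carrier, product and the image D of D \<rightarrow> C)\<close>

definition unital_hom :: "('r::ring_1 \<Rightarrow> 's::ring_1) \<Rightarrow> bool" where
  "unital_hom f \<longleftrightarrow> f 1 = 1 \<and> (\<forall>x y. f (x + y) = f x + f y) \<and> (\<forall>x y. f (x * y) = f x * f y)"

definition alg_struct :: "('k::comm_ring_1 \<Rightarrow> 'a::ring_1) \<Rightarrow> bool" where
  "alg_struct u \<longleftrightarrow> unital_hom u \<and> (\<forall>k x. u k * x = x * u k)"

definition Cpow :: "'c::zero set \<Rightarrow> nat \<Rightarrow> (nat \<Rightarrow> 'c) set" where
  "Cpow C n = {v. (\<forall>i<n. v i \<in> C) \<and> (\<forall>i\<ge>n. v i = 0)}"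

text \<open>Left D2: C \<otimes>_D C is D-C-bimodule isomorphic to a direct summand of C^n, i.e. there are
  D-C-bimodule maps f : C \<otimes>_D C \<rightarrow> C^n and g : C^n \<rightarrow> C \<otimes>_D C with g \<circ> f = id.\<close>
definition left_D2 :: "'c::ab_group_add set \<Rightarrow> ('c \<Rightarrow> 'c \<Rightarrow> 'c) \<Rightarrow> 'c set \<Rightarrow> bool" where
  "left_D2 C mul D \<longleftrightarrow> (\<exists>(n::nat) f g.
     (\<forall>xs\<in>lists (C \<times> C). f xs \<in> Cpow C n) \<and>
     (\<forall>xs\<in>lists (C \<times> C). \<forall>ys\<in>lists (C \<times> C). teq C C D mul mul xs ys \<longrightarrow> f xs = f ys) \<and>
     (\<forall>xs\<in>lists (C \<times> C). \<forall>ys\<in>lists (C \<times> C). f (xs @ ys) = f xs + f ys) \<and>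
     (\<forall>xs\<in>lists (C \<times> C). \<forall>d\<in>D. \<forall>i<n.
         f (map (\<lambda>(x, y). (mul d x, y)) xs) i = mul d (f xs i)) \<and>
     (\<forall>xs\<in>lists (C \<times> C). \<forall>c\<in>C. \<forall>i<n.
         f (map (\<lambda>(x, y). (x, mul y c)) xs) i = mul (f xs i) c) \<and>
     (\<forall>v\<in>Cpow C n. g v \<in> lists (C \<times> C)) \<and>
     (\<forall>v\<in>Cpow C n. \<forall>w\<in>Cpow C n. teq C C D mul mul (g (v + w)) (g v @ g w)) \<and>
     (\<forall>v\<in>Cpow C n. \<forall>d\<in>D.
         teq C C D mul mul (g (\<lambda>i. if i < n then mul d (v i) else 0))
                           (map (\<lambda>(x, y). (mul d x, y)) (g v))) \<and>
     (\<forall>v\<in>Cpow C n. \<forall>c\<in>C.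
         teq C C D mul mul (g (\<lambda>i. if i < n then mul (v i) c else 0))
                           (map (\<lambda>(x, y). (x, mul y c)) (g v))) \<and>
     (\<forall>xs\<in>lists (C \<times> C). teq C C D mul mul (g (f xs)) xs))"

definition additive_on :: "'c::plus set \<Rightarrow> ('c \<Rightarrow> 'c) \<Rightarrow> bool" where
  "additive_on C \<phi> \<longleftrightarrow> (\<forall>x\<in>C. \<forall>y\<in>C. \<phi> (x + y) = \<phi> x + \<phi> y)"

definition End_left :: "'c::plus set \<Rightarrow> ('c \<Rightarrow> 'c \<Rightarrow> 'c) \<Rightarrow> 'c set \<Rightarrow> ('c \<Rightarrow> 'c) set" where
  "End_left C mul D = {\<psi>. (\<forall>c\<in>C. \<psi> c \<in> C) \<and> additive_on C \<psi> \<and>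
                         (\<forall>d\<in>D. \<forall>c\<in>C. \<psi> (mul d c) = mul d (\<psi> c))}"

definition left_balanced :: "'c::plus set \<Rightarrow> ('c \<Rightarrow> 'c \<Rightarrow> 'c) \<Rightarrow> 'c set \<Rightarrow> bool" where
  "left_balanced C mul D \<longleftrightarrow>
     (\<forall>\<phi>. (\<forall>c\<in>C. \<phi> c \<in> C) \<and> additive_on C \<phi> \<and>
          (\<forall>\<psi>\<in>End_left C mul D. \<forall>c\<in>C. \<phi> (\<psi> c) = \<psi> (\<phi> c))
        \<longrightarrow> (\<exists>d\<in>D. \<forall>c\<in>C. \<phi> c = mul d c))"

text \<open>Data of a left bialgebroid H over R': carrier H, product hmul, unit hone, source s, target t,
  comultiplication Delta (an element of H \<otimes>_R' H given by a representing list), counit eps;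
  R' has carrier Rs, product rmul, unit rone.  H \<otimes>_R' X uses the right R'-module structure
  h \<cdot> r = t(r) h on H.  A comodule algebra C comes with eta : R' \<rightarrow> C and coaction delta
  (delta c represents an element of H \<otimes>_R' C, with C a left R'-module via eta).\<close>

definition teqHC where
  "teqHC H hmul t Rs C cmul eta =
     teq H C Rs (\<lambda>h r. hmul (t r) h) (\<lambda>r x. cmul (eta r) x)"

definition left_comodule_algebra ::
  "'h::ab_group_add set \<Rightarrow> ('h \<Rightarrow> 'h \<Rightarrow> 'h) \<Rightarrow> 'h \<Rightarrow> ('r \<Rightarrow> 'h) \<Rightarrow> ('r \<Rightarrow> 'h)
   \<Rightarrow> ('h \<Rightarrow> ('h \<times> 'h) list) \<Rightarrow> ('h \<Rightarrow> 'r)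
   \<Rightarrow> 'r::plus set \<Rightarrow> ('r \<Rightarrow> 'r \<Rightarrow> 'r) \<Rightarrow> 'r
   \<Rightarrow> 'c::ab_group_add set \<Rightarrow> ('c \<Rightarrow> 'c \<Rightarrow> 'c) \<Rightarrow> 'c \<Rightarrow> ('r \<Rightarrow> 'c) \<Rightarrow> ('c \<Rightarrow> ('h \<times> 'c) list)
   \<Rightarrow> bool" where
  "left_comodule_algebra H hmul hone s t Delta eps Rs rmul rone C cmul cone eta delta \<longleftrightarrow>
     (\<forall>r\<in>Rs. eta r \<in> C) \<and> eta rone = cone \<and>
     (\<forall>r\<in>Rs. \<forall>r'\<in>Rs. eta (r + r') = eta r + eta r') \<and>
     (\<forall>r\<in>Rs. \<forall>r'\<in>Rs. eta (rmul r r') = cmul (eta r) (eta r')) \<and>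
     (\<forall>c\<in>C. delta c \<in> lists (H \<times> C)) \<and>
     teqHC H hmul t Rs C cmul eta (delta cone) [(hone, cone)] \<and>
     (\<forall>c\<in>C. \<forall>r\<in>Rs. teqHC H hmul t Rs C cmul eta
         (map (\<lambda>(h, x). (hmul h (t r), x)) (delta c))
         (map (\<lambda>(h, x). (h, cmul x (eta r))) (delta c))) \<and>
     (\<forall>c\<in>C. \<forall>c'\<in>C. teqHC H hmul t Rs C cmul eta
         (delta (cmul c c'))
         (concat (map (\<lambda>(h, x). map (\<lambda>(h', x'). (hmul h h', cmul x x')) (delta c')) (delta c)))) \<and>
     (\<forall>c\<in>C. teq3 H H C Rs (\<lambda>h r. hmul (t r) h) (\<lambda>r h. hmul (s r) h)
                           (\<lambda>h r. hmul (t r) h) (\<lambda>r x. cmul (eta r) x)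
         (concat (map (\<lambda>(h, x). map (\<lambda>(h1, h2). (h1, h2, x)) (Delta h)) (delta c)))
         (concat (map (\<lambda>(h, x). map (\<lambda>(h', x'). (h, h', x')) (delta x)) (delta c)))) \<and>
     (\<forall>c\<in>C. sum_list (map (\<lambda>(h, x). cmul (eta (eps h)) x) (delta c)) = c)"

definition coinvariants where
  "coinvariants H hmul hone t Rs C cmul eta delta =
     {c \<in> C. teqHC H hmul t Rs C cmul eta (delta c) [(hone, c)]}"

text \<open>Galois: the map c \<otimes>_D c' \<mapsto> c_(-1) \<otimes> c_(0) c' from C \<otimes>_D C (D = coinvariants) to
  H \<otimes>_R' C is well defined and bijective.\<close>
definition left_Galois where
  "left_Galois H hmul hone s t Delta eps Rs rmul rone C cmul cone eta delta \<longleftrightarrow>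
     left_comodule_algebra H hmul hone s t Delta eps Rs rmul rone C cmul cone eta delta \<and>
     (let D = coinvariants H hmul hone t Rs C cmul eta delta;
          gal = (\<lambda>xs. concat (map (\<lambda>(c, c'). map (\<lambda>(h, x). (h, cmul x c')) (delta c)) xs))
      in (\<forall>xs\<in>lists (C \<times> C). \<forall>ys\<in>lists (C \<times> C).
             teq C C D cmul cmul xs ys \<longleftrightarrow> teqHC H hmul t Rs C cmul eta (gal xs) (gal ys)) \<and>
         (\<forall>zs\<in>lists (H \<times> C). \<exists>xs\<in>lists (C \<times> C). teqHC H hmul t Rs C cmul eta (gal xs) zs))"

definition teqA :: "('b \<Rightarrow> 'a::ring_1) \<Rightarrow> ('a \<times> 'a) list \<Rightarrow> ('a \<times> 'a) list \<Rightarrow> bool" where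
  "teqA \<iota> = teq UNIV UNIV (range \<iota>) (*) (*)"

definition centralizer :: "('b \<Rightarrow> 'a::ring_1) \<Rightarrow> 'a set" where
  "centralizer \<iota> = {r. \<forall>b. r * \<iota> b = \<iota> b * r}"

definition Smaps :: "('b \<Rightarrow> 'a::ring_1) \<Rightarrow> ('a \<Rightarrow> 'a) set" where
  "Smaps \<iota> = {\<alpha>. (\<forall>x y. \<alpha> (x + y) = \<alpha> x + \<alpha> y) \<and>
               (\<forall>b x. \<alpha> (\<iota> b * x) = \<iota> b * \<alpha> x) \<and> (\<forall>b x. \<alpha> (x * \<iota> b) = \<alpha> x * \<iota> b)}"

definition Emaps :: "('b \<Rightarrow> 'a::ring_1) \<Rightarrow> ('a \<Rightarrow> 'a) set" where
  "Emaps \<iota> = {g. (\<forall>x y. g (x + y) = g x + g y) \<and> (\<forall>b x. g (x * \<iota> b) = g x * \<iota> b)}"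

text \<open>T = (A \<otimes>_B A)^B, elements given by representing lists\<close>
definition Tset :: "('b \<Rightarrow> 'a::ring_1) \<Rightarrow> ('a \<times> 'a) list set" where
  "Tset \<iota> = {ts. \<forall>b. teqA \<iota> (map (\<lambda>(x, y). (\<iota> b * x, y)) ts) (map (\<lambda>(x, y). (x, y * \<iota> b)) ts)}"

definition left_D2_quasibase ::
  "('b \<Rightarrow> 'a::ring_1) \<Rightarrow> nat \<Rightarrow> (nat \<Rightarrow> 'a \<Rightarrow> 'a) \<Rightarrow> (nat \<Rightarrow> ('a \<times> 'a) list) \<Rightarrow> bool" where
  "left_D2_quasibase \<iota> n \<beta> t \<longleftrightarrow>
     (\<forall>i<n. \<beta> i \<in> Smaps \<iota> \<and> t i \<in> Tset \<iota>) \<and>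
     (\<forall>a a'. teqA \<iota> [(a, a')]
        (concat (map (\<lambda>i. map (\<lambda>(x, y). (x, y * (\<beta> i a * a'))) (t i)) [0..<n])))"

definition twist :: "('a::ring_1 \<Rightarrow> 'a) \<Rightarrow> ('a \<times> 'a) list \<Rightarrow> 'a \<Rightarrow> 'a" where
  "twist f ts = (\<lambda>x. sum_list (map (\<lambda>(y, z). f (x * y) * z) ts))"

definition Delta_cop :: "nat \<Rightarrow> (nat \<Rightarrow> 'a \<Rightarrow> 'a) \<Rightarrow> (nat \<Rightarrow> ('a::ring_1 \<times> 'a) list)
    \<Rightarrow> ('a \<Rightarrow> 'a) \<Rightarrow> (('a \<Rightarrow> 'a) \<times> ('a \<Rightarrow> 'a)) list" where
  "Delta_cop n \<beta> t \<alpha> = map (\<lambda>i. (\<beta> i, twist \<alpha> (t i))) [0..<n]"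

definition deltaL :: "nat \<Rightarrow> (nat \<Rightarrow> 'a \<Rightarrow> 'a) \<Rightarrow> (nat \<Rightarrow> ('a::ring_1 \<times> 'a) list)
    \<Rightarrow> ('a \<Rightarrow> 'a) \<Rightarrow> (('a \<Rightarrow> 'a) \<times> ('a \<Rightarrow> 'a)) list" where
  "deltaL n \<beta> t g = map (\<lambda>i. (\<beta> i, twist g (t i))) [0..<n]"

definition lam :: "'a::ring_1 \<Rightarrow> 'a \<Rightarrow> 'a" where "lam a = (\<lambda>x. a * x)"
definition rho :: "'a::ring_1 \<Rightarrow> 'a \<Rightarrow> 'a" where "rho a = (\<lambda>x. x * a)"

end

theory Submission
  imports Defs
begin


lemma zspan_neg: "x \<in> zspan X \<Longrightarrow> - x \<in> zspan X"
  using zspan.diff[OF zspan.zero, of x] by simp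

lemma zspan_add: "x \<in> zspan X \<Longrightarrow> y \<in> zspan X \<Longrightarrow> x + y \<in> zspan X"
  using zspan.diff[of x X "-y"] zspan_neg[of y] by simp

lemma fsum_Nil[simp]: "fsum [] = 0" by (simp add: fsum_def)
lemma fsum_Cons[simp]: "fsum (x # xs) = gen x + fsum xs" by (simp add: fsum_def)
lemma fsum_append[simp]: "fsum (xs @ ys) = fsum xs + fsum ys" by (simp add: fsum_def)
lemma fsum_concat: "fsum (concat xss) = sum_list (map fsum xss)"
  by (induct xss) auto

definition zeq where
  "zeq X Rl xs ys \<longleftrightarrow> set xs \<subseteq> X \<and> set ys \<subseteq> X \<and> fsum xs - fsum ys \<in> zspan Rl"

lemma teq_zeq: "teq M N D r l = zeq (M \<times> N) (tensor_rels M N D r l)"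
  by (simp add: fun_eq_iff teq_def zeq_def)
lemma teq3_zeq: "teq3 M1 M2 M3 D r1 l2 r2 l3 = zeq (M1 \<times> M2 \<times> M3) (tensor3_rels M1 M2 M3 D r1 l2 r2 l3)"
  by (simp add: fun_eq_iff teq3_def zeq_def)

lemma zeq_refl: "set xs \<subseteq> X \<Longrightarrow> zeq X Rl xs xs"
  by (simp add: zeq_def zspan.zero)
lemma zeq_sym: "zeq X Rl xs ys \<Longrightarrow> zeq X Rl ys xs"
  unfolding zeq_def using zspan_neg[of "fsum xs - fsum ys" Rl] by auto
lemma zeq_trans: "zeq X Rl xs ys \<Longrightarrow> zeq X Rl ys zs \<Longrightarrow> zeq X Rl xs zs"
  unfolding zeq_def using zspan_add[of "fsum xs - fsum ys" Rl "fsum ys - fsum zs"] by auto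
lemma zeq_append: "zeq X Rl xs xs' \<Longrightarrow> zeq X Rl ys ys' \<Longrightarrow> zeq X Rl (xs @ ys) (xs' @ ys')"
  unfolding zeq_def using zspan_add[of "fsum xs - fsum xs'" Rl "fsum ys - fsum ys'"]
  by (auto simp: algebra_simps)
lemma zeq_fsum: "set xs \<subseteq> X \<Longrightarrow> set ys \<subseteq> X \<Longrightarrow> fsum xs = fsum ys \<Longrightarrow> zeq X Rl xs ys"
  by (simp add: zeq_def zspan.zero)
lemma zeq_concat: "(\<And>i. i \<in> set I \<Longrightarrow> zeq X Rl (f i) (g i)) \<Longrightarrow>
   zeq X Rl (concat (map f I)) (concat (map g I))"
proof (induct I)
  case Nil then show ?case by (simp add: zeq_refl)
next
  case (Cons a I) then show ?case by (simp add: zeq_append)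
qed
lemma zeq_rel3: "gen a - gen b - gen c \<in> Rl \<Longrightarrow> a \<in> X \<Longrightarrow> b \<in> X \<Longrightarrow> c \<in> X \<Longrightarrow> zeq X Rl [a] [b, c]"
  unfolding zeq_def using zspan.gen[of "gen a - gen b - gen c" Rl] by (simp add: algebra_simps)
lemma zeq_rel2: "gen a - gen b \<in> Rl \<Longrightarrow> a \<in> X \<Longrightarrow> b \<in> X \<Longrightarrow> zeq X Rl [a] [b]"
  unfolding zeq_def using zspan.gen[of "gen a - gen b" Rl] by (simp add: algebra_simps)

lemma zeq_zero: "gen a - gen a - gen a \<in> Rl \<Longrightarrow> a \<in> X \<Longrightarrow> zeq X Rl [a] []"
  unfolding zeq_def using zspan_neg[OF zspan.gen[of "gen a - gen a - gen a" Rl]] by simp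


lemma zeq_split:
  assumes P: "\<And>u. u \<in> V \<Longrightarrow> P u \<in> X"
    and rel: "\<And>u v. u \<in> V \<Longrightarrow> v \<in> V \<Longrightarrow> gen (P (u + v)) - gen (P u) - gen (P v) \<in> Rl"
    and add: "\<And>u v. u \<in> V \<Longrightarrow> v \<in> V \<Longrightarrow> u + v \<in> V" and z: "0 \<in> V"
    and us: "set us \<subseteq> V"
  shows "zeq X Rl [P (sum_list us)] (map P us)"
  using us
proof (induct us)
  case Nil
  have "gen (P (0 + 0)) - gen (P 0) - gen (P 0) \<in> Rl" using rel[OF z z] .
  then have "zeq X Rl [P 0] []" using zeq_zero[of "P 0" Rl X] P[OF z] by simp
  then show ?case by simp
next
  case (Cons u us)
  have uV: "u \<in> V" and usV: "set us \<subseteq> V" using Cons(2) by auto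
  have su: "sum_list us \<in> V" using usV
  proof (induct us)
    case Nil then show ?case using z by simp
  next
    case (Cons a us) then show ?case using add by simp
  qed
  have 1: "zeq X Rl [P (u + sum_list us)] [P u, P (sum_list us)]"
    by (rule zeq_rel3[OF rel[OF uV su] P[OF add[OF uV su]] P[OF uV] P[OF su]])
  have 2: "zeq X Rl ([P u] @ [P (sum_list us)]) ([P u] @ map P us)"
    by (rule zeq_append[OF zeq_refl Cons(1)[OF usV]]) (simp add: P[OF uV])
  show ?case using zeq_trans[OF 1] 2 by simp
qed

lemma fsum_swap:
  "fsum (concat (map (\<lambda>x. map (\<lambda>i. f x i) I) xs)) = fsum (concat (map (\<lambda>i. map (\<lambda>x. f x i) xs) I))"
proof (induct xs)
  case Nil
  show ?case by (induct I) simp_all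
next
  case (Cons a xs)
  have "fsum (concat (map (\<lambda>i. map (\<lambda>x. f x i) (a # xs)) I))
      = fsum (map (f a) I) + fsum (concat (map (\<lambda>i. map (\<lambda>x. f x i) xs) I))"
    by (induct I) (simp_all add: algebra_simps)
  then show ?case using Cons by simp
qed


lemma zeq_regroup:
  assumes P: "\<And>i u. i \<in> set I \<Longrightarrow> u \<in> V \<Longrightarrow> P i u \<in> X"
    and rel: "\<And>i u v. i \<in> set I \<Longrightarrow> u \<in> V \<Longrightarrow> v \<in> V \<Longrightarrow> gen (P i (u + v)) - gen (P i u) - gen (P i v) \<in> Rl"
    and add: "\<And>u v. u \<in> V \<Longrightarrow> v \<in> V \<Longrightarrow> u + v \<in> V" and z: "0 \<in> V"
    and c: "\<And>x i. x \<in> set xs \<Longrightarrow> i \<in> set I \<Longrightarrow> c x i \<in> V"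
  shows "zeq X Rl (concat (map (\<lambda>x. map (\<lambda>i. P i (c x i)) I) xs))
                  (map (\<lambda>i. P i (sum_list (map (\<lambda>x. c x i) xs))) I)"
proof -
  have 1: "zeq X Rl (concat (map (\<lambda>x. map (\<lambda>i. P i (c x i)) I) xs))
                  (concat (map (\<lambda>i. map (\<lambda>x. P i (c x i)) xs) I))"
  proof (rule zeq_fsum)
    show "fsum (concat (map (\<lambda>x. map (\<lambda>i. P i (c x i)) I) xs)) = fsum (concat (map (\<lambda>i. map (\<lambda>x. P i (c x i)) xs) I))"
      by (rule fsum_swap)
  qed (use P c in auto)
  have 2: "zeq X Rl (concat (map (\<lambda>i. map (\<lambda>x. P i (c x i)) xs) I))
                  (concat (map (\<lambda>i. [P i (sum_list (map (\<lambda>x. c x i) xs))]) I))"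
  proof (rule zeq_concat)
    fix i assume i: "i \<in> set I"
    have "zeq X Rl [P i (sum_list (map (\<lambda>x. c x i) xs))] (map (P i) (map (\<lambda>x. c x i) xs))"
      by (rule zeq_split[where V=V, OF P[OF i] rel[OF i] add z]) (use c i in auto)
    then show "zeq X Rl (map (\<lambda>x. P i (c x i)) xs) [P i (sum_list (map (\<lambda>x. c x i) xs))]"
      by (simp add: zeq_sym o_def)
  qed
  have 3: "concat (map (\<lambda>i. [P i (sum_list (map (\<lambda>x. c x i) xs))]) I) = map (\<lambda>i. P i (sum_list (map (\<lambda>x. c x i) xs))) I"
    by (induct I) auto
  show ?thesis using zeq_trans[OF 1 2] 3 by simp
qed




definition lin :: "('x \<Rightarrow> 'g::ring_1) \<Rightarrow> ('x \<Rightarrow> int) \<Rightarrow> 'g" where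
  "lin F \<phi> = (\<Sum>p\<in>{p. \<phi> p \<noteq> 0}. of_int (\<phi> p) * F p)"

definition finsupp :: "('x \<Rightarrow> int) \<Rightarrow> bool" where
  "finsupp \<phi> \<longleftrightarrow> finite {p. \<phi> p \<noteq> 0}"

lemma lin_S: "finite S \<Longrightarrow> {p. \<phi> p \<noteq> 0} \<subseteq> S \<Longrightarrow> lin F \<phi> = (\<Sum>p\<in>S. of_int (\<phi> p) * F p)"
  unfolding lin_def by (rule sum.mono_neutral_left) auto

lemma lin_diff:
  assumes "finsupp \<phi>" "finsupp \<psi>" shows "lin F (\<phi> - \<psi>) = lin F \<phi> - lin F \<psi>"
proof -
  let ?S = "{p. \<phi> p \<noteq> 0} \<union> {p. \<psi> p \<noteq> 0}"
  have f: "finite ?S" using assms by (simp add: finsupp_def)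
  have "lin F (\<phi> - \<psi>) = (\<Sum>p\<in>?S. of_int ((\<phi> - \<psi>) p) * F p)" by (rule lin_S[OF f]) auto
  also have "\<dots> = (\<Sum>p\<in>?S. of_int (\<phi> p) * F p) - (\<Sum>p\<in>?S. of_int (\<psi> p) * F p)"
    by (simp add: sum_subtractf algebra_simps)
  also have "\<dots> = lin F \<phi> - lin F \<psi>" using lin_S[OF f, of \<phi> F] lin_S[OF f, of \<psi> F] by auto
  finally show ?thesis .
qed

lemma finsupp_diff: "finsupp \<phi> \<Longrightarrow> finsupp \<psi> \<Longrightarrow> finsupp (\<phi> - \<psi>)"
  unfolding finsupp_def by (rule finite_subset[of _ "{p. \<phi> p \<noteq> 0} \<union> {p. \<psi> p \<noteq> 0}"]) auto

lemma finsupp_add: "finsupp \<phi> \<Longrightarrow> finsupp \<psi> \<Longrightarrow> finsupp (\<phi> + \<psi>)"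
  unfolding finsupp_def by (rule finite_subset[of _ "{p. \<phi> p \<noteq> 0} \<union> {p. \<psi> p \<noteq> 0}"]) auto

lemma finsupp_gen: "finsupp (gen a)"
  unfolding finsupp_def gen_def by (rule finite_subset[of _ "{a}"]) auto

lemma finsupp_zero: "finsupp 0" by (simp add: finsupp_def)

lemma lin_zero: "lin F 0 = 0" by (simp add: lin_def)

lemma lin_gen: "lin F (gen a) = F a"
proof -
  have "lin F (gen a) = (\<Sum>p\<in>{a}. of_int (gen a p) * F p)" by (rule lin_S) (auto simp: gen_def)
  then show ?thesis by (simp add: gen_def)
qed

lemma lin_add:
  assumes "finsupp \<phi>" "finsupp \<psi>" shows "lin F (\<phi> + \<psi>) = lin F \<phi> + lin F \<psi>"
proof -
  have "finsupp (- \<psi>)" using finsupp_diff[OF finsupp_zero assms(2)] by simp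
  then show ?thesis using lin_diff[OF assms(1), of "-\<psi>" F] lin_diff[OF finsupp_zero assms(2), of F]
    by (simp add: lin_zero)
qed

lemma finsupp_fsum: "finsupp (fsum xs)"
proof (induct xs)
  case Nil show ?case unfolding fsum_Nil by (rule finsupp_zero)
next
  case (Cons a xs) show ?case unfolding fsum_Cons by (rule finsupp_add[OF finsupp_gen Cons])
qed

lemma lin_fsum: "lin F (fsum xs) = sum_list (map F xs)"
proof (induct xs)
  case Nil then show ?case using lin_zero by (metis fsum_Nil list.map(1) sum_list.Nil)
next
  case (Cons a xs) show ?case
    unfolding fsum_Cons lin_add[OF finsupp_gen finsupp_fsum] lin_gen Cons by simp
qed

lemma lin3: "lin F (gen a - gen b - gen c) = F a - F b - F c"
  by (simp add: lin_diff finsupp_diff finsupp_gen lin_gen)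
lemma lin2: "lin F (gen a - gen b) = F a - F b"
  by (simp add: lin_diff finsupp_diff finsupp_gen lin_gen)
lemma finsupp3: "finsupp (gen a - gen b - gen c)"
  by (simp add: finsupp_diff finsupp_gen)
lemma finsupp2: "finsupp (gen a - gen b)"
  by (simp add: finsupp_diff finsupp_gen)

lemma zspan_lin:
  assumes "\<And>\<phi>. \<phi> \<in> Rl \<Longrightarrow> finsupp \<phi> \<and> lin F \<phi> = 0"
  shows "\<phi> \<in> zspan Rl \<Longrightarrow> finsupp \<phi> \<and> lin F \<phi> = 0"
proof (induct rule: zspan.induct)
  case zero then show ?case using finsupp_zero lin_zero by blast
next
  case (gen x) then show ?case using assms by blast
next
  case (diff x y)
  then have "lin F (x - y) = 0" using lin_diff[of x y F] by (metis diff_self)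
  moreover have "(\<lambda>a. x a - y a) = x - y" by (rule ext) simp
  ultimately show ?case using finsupp_diff[of x y] diff by metis
qed

lemma zeq_sum_eq:
  assumes "zeq X Rl xs ys" and "\<And>\<phi>. \<phi> \<in> Rl \<Longrightarrow> finsupp \<phi> \<and> lin F \<phi> = 0"
  shows "sum_list (map F xs) = sum_list (map F ys)"
proof -
  have "fsum xs - fsum ys \<in> zspan Rl" using assms(1) by (simp add: zeq_def)
  then have "lin F (fsum xs - fsum ys) = 0" using zspan_lin[OF assms(2)] by blast
  then show ?thesis by (simp add: lin_diff finsupp_fsum lin_fsum)
qed

lemma teq_sum_eq:
  fixes F :: "'m::plus \<times> 'n::plus \<Rightarrow> 'g::ring_1"
  assumes "teq M N D r l xs ys"
    and addL: "\<And>m m' x. m \<in> M \<Longrightarrow> m' \<in> M \<Longrightarrow> x \<in> N \<Longrightarrow> F (m + m', x) = F (m, x) + F (m', x)"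
    and addR: "\<And>m x x'. m \<in> M \<Longrightarrow> x \<in> N \<Longrightarrow> x' \<in> N \<Longrightarrow> F (m, x + x') = F (m, x) + F (m, x')"
    and bal: "\<And>m x d. m \<in> M \<Longrightarrow> x \<in> N \<Longrightarrow> d \<in> D \<Longrightarrow> F (r m d, x) = F (m, l d x)"
  shows "sum_list (map F xs) = sum_list (map F ys)"
proof (rule zeq_sum_eq)
  show "zeq (M \<times> N) (tensor_rels M N D r l) xs ys" using assms(1) by (simp add: teq_zeq)
next
  fix \<phi> assume "\<phi> \<in> tensor_rels M N D r l"
  then show "finsupp \<phi> \<and> lin F \<phi> = 0"
    unfolding tensor_rels_def using addL addR bal
    by (auto simp: lin3 lin2 finsupp3 finsupp2)
qed

lemma teq3_sum_eq:
  fixes F :: "'m1::plus \<times> 'm2::plus \<times> 'm3::plus \<Rightarrow> 'g::ring_1"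
  assumes "teq3 M1 M2 M3 D r1 l2 r2 l3 xs ys"
    and add1: "\<And>a a' b c. a \<in> M1 \<Longrightarrow> a' \<in> M1 \<Longrightarrow> b \<in> M2 \<Longrightarrow> c \<in> M3 \<Longrightarrow> F (a + a', b, c) = F (a, b, c) + F (a', b, c)"
    and add2: "\<And>a b b' c. a \<in> M1 \<Longrightarrow> b \<in> M2 \<Longrightarrow> b' \<in> M2 \<Longrightarrow> c \<in> M3 \<Longrightarrow> F (a, b + b', c) = F (a, b, c) + F (a, b', c)"
    and add3: "\<And>a b c c'. a \<in> M1 \<Longrightarrow> b \<in> M2 \<Longrightarrow> c \<in> M3 \<Longrightarrow> c' \<in> M3 \<Longrightarrow> F (a, b, c + c') = F (a, b, c) + F (a, b, c')"
    and bal1: "\<And>a b c d. a \<in> M1 \<Longrightarrow> b \<in> M2 \<Longrightarrow> c \<in> M3 \<Longrightarrow> d \<in> D \<Longrightarrow> F (r1 a d, b, c) = F (a, l2 d b, c)"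
    and bal2: "\<And>a b c d. a \<in> M1 \<Longrightarrow> b \<in> M2 \<Longrightarrow> c \<in> M3 \<Longrightarrow> d \<in> D \<Longrightarrow> F (a, r2 b d, c) = F (a, b, l3 d c)"
  shows "sum_list (map F xs) = sum_list (map F ys)"
proof (rule zeq_sum_eq)
  show "zeq (M1 \<times> M2 \<times> M3) (tensor3_rels M1 M2 M3 D r1 l2 r2 l3) xs ys" using assms(1) by (simp add: teq3_zeq)
next
  fix \<phi> assume "\<phi> \<in> tensor3_rels M1 M2 M3 D r1 l2 r2 l3"
  then show "finsupp \<phi> \<and> lin F \<phi> = 0"
    unfolding tensor3_rels_def using add1 add2 add3 bal1 bal2
    by (auto simp: lin3 lin2 finsupp3 finsupp2)
qed




lemma sum_list_map_concat: "sum_list (map F (concat xss)) = sum_list (map (\<lambda>xs. sum_list (map F xs)) xss)"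
  by (induct xss) auto

locale qb =
  fixes \<iota> :: "'b::ring_1 \<Rightarrow> 'a::ring_1" and n :: nat and \<beta> :: "nat \<Rightarrow> 'a \<Rightarrow> 'a"
    and t :: "nat \<Rightarrow> ('a \<times> 'a) list"
  assumes qbase: "left_D2_quasibase \<iota> n \<beta> t"
begin

lemma beta_S: "i < n \<Longrightarrow> \<beta> i \<in> Smaps \<iota>" using qbase by (simp add: left_D2_quasibase_def)
lemma t_T: "i < n \<Longrightarrow> t i \<in> Tset \<iota>" using qbase by (simp add: left_D2_quasibase_def)

lemma teqA_sum_eq:
  fixes F :: "'a \<Rightarrow> 'a \<Rightarrow> 'g::ring_1"
  assumes "teqA \<iota> xs ys"
    and addL: "\<And>x x' y. F (x + x') y = F x y + F x' y"
    and addR: "\<And>x y y'. F x (y + y') = F x y + F x y'"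
    and bal: "\<And>x y b. F (x * \<iota> b) y = F x (\<iota> b * y)"
  shows "(\<Sum>(x, y)\<leftarrow>xs. F x y) = (\<Sum>(x, y)\<leftarrow>ys. F x y)"
proof -
  have "sum_list (map (case_prod F) xs) = sum_list (map (case_prod F) ys)"
    by (rule teq_sum_eq[OF assms(1)[unfolded teqA_def]]) (use addL addR bal in auto)
  then show ?thesis by simp
qed

lemma Q:
  fixes F :: "'a \<Rightarrow> 'a \<Rightarrow> 'g::ring_1"
  assumes addL: "\<And>x x' y. F (x + x') y = F x y + F x' y"
    and addR: "\<And>x y y'. F x (y + y') = F x y + F x y'"
    and bal: "\<And>x y b. F (x * \<iota> b) y = F x (\<iota> b * y)"
  shows "F a a' = (\<Sum>i\<leftarrow>[0..<n]. \<Sum>(y, z)\<leftarrow>t i. F y (z * (\<beta> i a * a')))"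
proof -
  have "teqA \<iota> [(a, a')] (concat (map (\<lambda>i. map (\<lambda>(x, y). (x, y * (\<beta> i a * a'))) (t i)) [0..<n]))"
    using qbase by (simp add: left_D2_quasibase_def)
  from teqA_sum_eq[OF this addL addR bal] show ?thesis
    by (simp add: sum_list_map_concat o_def case_prod_unfold)
qed

lemma Tprop:
  fixes F :: "'a \<Rightarrow> 'a \<Rightarrow> 'g::ring_1"
  assumes ts: "ts \<in> Tset \<iota>"
    and addL: "\<And>x x' y. F (x + x') y = F x y + F x' y"
    and addR: "\<And>x y y'. F x (y + y') = F x y + F x y'"
    and bal: "\<And>x y b. F (x * \<iota> b) y = F x (\<iota> b * y)"
  shows "(\<Sum>(y, z)\<leftarrow>ts. F (\<iota> b * y) z) = (\<Sum>(y, z)\<leftarrow>ts. F y (z * \<iota> b))"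
proof -
  have "teqA \<iota> (map (\<lambda>(x, y). (\<iota> b * x, y)) ts) (map (\<lambda>(x, y). (x, y * \<iota> b)) ts)"
    using ts by (simp add: Tset_def)
  from teqA_sum_eq[OF this addL addR bal] show ?thesis
    by (simp add: o_def case_prod_unfold)
qed

end



lemma sl_apply: "(\<Sum>x\<leftarrow>xs. f x) a = (\<Sum>x\<leftarrow>xs. f x a)"
  by (induct xs) auto
lemma sl_apply2: "(\<Sum>x\<leftarrow>xs. f x) a b = (\<Sum>x\<leftarrow>xs. f x a b)"
  by (induct xs) auto
lemma sl_apply3: "(\<Sum>x\<leftarrow>xs. f x) a b c = (\<Sum>x\<leftarrow>xs. f x a b c)"
  by (induct xs) auto
lemma sl_swap: "(\<Sum>x\<leftarrow>xs. \<Sum>y\<leftarrow>ys. f x y) = (\<Sum>y\<leftarrow>ys. \<Sum>x\<leftarrow>xs. (f x y :: 'g::comm_monoid_add))"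
  by (induct xs) (auto simp: sum_list_addf)
lemma sl_cong: "(\<And>x. x \<in> set xs \<Longrightarrow> f x = g x) \<Longrightarrow> (\<Sum>x\<leftarrow>xs. f x) = (\<Sum>x\<leftarrow>xs. g x)"
  by (induct xs) auto
lemma sl_add_hom:
  fixes g :: "'x::ab_group_add \<Rightarrow> 'g::ab_group_add"
  assumes "\<And>x y. g (x + y) = g x + g y"
  shows "g (\<Sum>x\<leftarrow>xs. f x) = (\<Sum>x\<leftarrow>xs. g (f x))"
proof -
  have z: "g 0 = 0" using assms[of 0 0] by (metis add_cancel_right_right)
  show ?thesis by (induct xs) (auto simp: z assms)
qed
lemma sl_mult_const: "(\<Sum>x\<leftarrow>xs. f x) * c = (\<Sum>x\<leftarrow>xs. f x * (c::'g::semiring_0))"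
  by (simp add: sum_list_mult_const)
lemma sl_const_mult: "c * (\<Sum>x\<leftarrow>xs. f x) = (\<Sum>x\<leftarrow>xs. (c::'g::semiring_0) * f x)"
  by (simp add: sum_list_const_mult)

lemma EmapsI: "(\<And>x y. g (x + y) = g x + g y) \<Longrightarrow> (\<And>b x. g (x * \<iota> b) = g x * \<iota> b) \<Longrightarrow> g \<in> Emaps \<iota>"
  by (simp add: Emaps_def)
lemma E_add: "g \<in> Emaps \<iota> \<Longrightarrow> g (x + y) = g x + g y" by (simp add: Emaps_def)
lemma E_rlin: "g \<in> Emaps \<iota> \<Longrightarrow> g (x * \<iota> b) = g x * \<iota> b" by (simp add: Emaps_def)
lemma E_zero: "g \<in> Emaps \<iota> \<Longrightarrow> g 0 = 0" using E_add[of g \<iota> 0 0] by simp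
lemma E_sum: "g \<in> Emaps \<iota> \<Longrightarrow> g (\<Sum>x\<leftarrow>xs. f x) = (\<Sum>x\<leftarrow>xs. g (f x))"
  by (rule sl_add_hom) (rule E_add)

lemma SmapsI: "(\<And>x y. g (x + y) = g x + g y) \<Longrightarrow> (\<And>b x. g (\<iota> b * x) = \<iota> b * g x) \<Longrightarrow> (\<And>b x. g (x * \<iota> b) = g x * \<iota> b) \<Longrightarrow> g \<in> Smaps \<iota>"
  by (simp add: Smaps_def)
lemma S_llin: "g \<in> Smaps \<iota> \<Longrightarrow> g (\<iota> b * x) = \<iota> b * g x" by (simp add: Smaps_def)
lemma S_E: "g \<in> Smaps \<iota> \<Longrightarrow> g \<in> Emaps \<iota>" by (simp add: Smaps_def Emaps_def)

lemma R_comm: "r \<in> centralizer \<iota> \<Longrightarrow> r * \<iota> b = \<iota> b * r" by (simp add: centralizer_def)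

lemma E_comp: "f \<in> Emaps \<iota> \<Longrightarrow> g \<in> Emaps \<iota> \<Longrightarrow> f \<circ> g \<in> Emaps \<iota>"
  by (rule EmapsI) (simp_all add: E_add E_rlin)
lemma S_comp: "f \<in> Smaps \<iota> \<Longrightarrow> g \<in> Smaps \<iota> \<Longrightarrow> f \<circ> g \<in> Smaps \<iota>"
  by (rule SmapsI) (simp_all add: S_E[THEN E_add] S_E[THEN E_rlin] S_llin)
lemma E_plus: "f \<in> Emaps \<iota> \<Longrightarrow> g \<in> Emaps \<iota> \<Longrightarrow> f + g \<in> Emaps \<iota>"
  by (rule EmapsI) (simp_all add: E_add E_rlin algebra_simps)
lemma S_plus: "f \<in> Smaps \<iota> \<Longrightarrow> g \<in> Smaps \<iota> \<Longrightarrow> f + g \<in> Smaps \<iota>"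
  by (rule SmapsI) (simp_all add: S_E[THEN E_add] S_E[THEN E_rlin] S_llin algebra_simps)
lemma E_0: "0 \<in> Emaps \<iota>" by (rule EmapsI) simp_all
lemma S_0: "0 \<in> Smaps \<iota>" by (rule SmapsI) simp_all
lemma E_id: "id \<in> Emaps \<iota>" by (rule EmapsI) simp_all
lemma S_id: "id \<in> Smaps \<iota>" by (rule SmapsI) simp_all
lemma E_lam: "lam a \<in> Emaps \<iota>" by (rule EmapsI) (simp_all add: lam_def algebra_simps)
lemma E_rho: "r \<in> centralizer \<iota> \<Longrightarrow> rho r \<in> Emaps \<iota>"
  by (rule EmapsI) (simp_all add: rho_def algebra_simps R_comm mult.assoc)
lemma S_lamR: "r \<in> centralizer \<iota> \<Longrightarrow> lam r \<in> Smaps \<iota>"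
  by (rule SmapsI) (simp_all add: lam_def algebra_simps R_comm flip: mult.assoc)
lemma S_rhoR: "r \<in> centralizer \<iota> \<Longrightarrow> rho r \<in> Smaps \<iota>"
  by (rule SmapsI) (simp_all add: rho_def algebra_simps R_comm mult.assoc)
lemma E_sl: "(\<And>x. x \<in> set xs \<Longrightarrow> f x \<in> Emaps \<iota>) \<Longrightarrow> (\<Sum>x\<leftarrow>xs. f x) \<in> Emaps \<iota>"
  by (induct xs) (auto simp: E_0 E_plus)

lemma lam_mult: "lam (a * b) = lam a \<circ> lam b" by (simp add: lam_def fun_eq_iff mult.assoc)
lemma rho_mult: "rho (a * b) = rho b \<circ> rho a" by (simp add: rho_def fun_eq_iff mult.assoc)
lemma lam_apply[simp]: "lam a x = a * x" by (simp add: lam_def)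
lemma rho_apply[simp]: "rho a x = x * a" by (simp add: rho_def)




definition good :: "('b \<Rightarrow> 'a::ring_1) \<Rightarrow> ('a \<Rightarrow> 'a \<Rightarrow> 'a) \<Rightarrow> bool" where
  "good \<iota> F \<longleftrightarrow> (\<forall>x x' y. F (x + x') y = F x y + F x' y) \<and> (\<forall>x y y'. F x (y + y') = F x y + F x y') \<and>
     (\<forall>x y b. F (x * \<iota> b) y = F x (\<iota> b * y)) \<and> (\<forall>x y b. F x (y * \<iota> b) = F x y * \<iota> b)"

definition colE :: "('a::ring_1 \<Rightarrow> 'a \<Rightarrow> 'a) \<Rightarrow> ('a \<times> 'a) list \<Rightarrow> 'a \<Rightarrow> 'a" where
  "colE F ts = (\<lambda>x. \<Sum>(y, z)\<leftarrow>ts. F x y * z)"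

lemma twist_colE: "twist f ts = colE (\<lambda>x y. f (x * y)) ts"
  by (simp add: twist_def colE_def)

lemma good_twist: "f \<in> Emaps \<iota> \<Longrightarrow> good \<iota> (\<lambda>x y. f (x * y))"
  by (simp add: good_def distrib_left distrib_right E_add mult.assoc E_rlin[symmetric])

context qb begin

lemma K2:
  assumes g: "good \<iota> F"
  shows "(\<Sum>i\<leftarrow>[0..<n]. colE F (t i) x * \<beta> i u) = F x u"
proof -
  have "(\<lambda>p q. F x p * q) u 1 = (\<Sum>i\<leftarrow>[0..<n]. \<Sum>(y, z)\<leftarrow>t i. (\<lambda>p q. F x p * q) y (z * (\<beta> i u * 1)))"
    by (rule Q) (use g in \<open>auto simp: good_def algebra_simps\<close>)
  then show ?thesis
    by (simp add: colE_def sl_mult_const case_prod_unfold mult.assoc)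
qed

lemma I1: "f \<in> Emaps \<iota> \<Longrightarrow> (\<Sum>i\<leftarrow>[0..<n]. twist f (t i) y * \<beta> i w) = f (y * w)"
  using K2[OF good_twist, of f y w] by (simp add: twist_colE)

lemma colE_E:
  assumes g: "good \<iota> F" and ts: "ts \<in> Tset \<iota>"
  shows "colE F ts \<in> Emaps \<iota>"
proof (rule EmapsI)
  fix x y show "colE F ts (x + y) = colE F ts x + colE F ts y"
    using g by (simp add: colE_def good_def distrib_right case_prod_unfold sum_list_addf)
next
  fix b x
  have "(\<Sum>(y, z)\<leftarrow>ts. (\<lambda>p q. F x p * q) (\<iota> b * y) z) = (\<Sum>(y, z)\<leftarrow>ts. (\<lambda>p q. F x p * q) y (z * \<iota> b))"
    by (rule Tprop[OF ts]) (use g in \<open>auto simp: good_def algebra_simps\<close>)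
  then show "colE F ts (x * \<iota> b) = colE F ts x * \<iota> b"
    using g by (simp add: colE_def good_def sl_mult_const case_prod_unfold mult.assoc)
qed

lemma twist_E: "f \<in> Emaps \<iota> \<Longrightarrow> ts \<in> Tset \<iota> \<Longrightarrow> twist f ts \<in> Emaps \<iota>"
  by (simp add: twist_colE colE_E good_twist)

lemma twist_S:
  assumes f: "f \<in> Smaps \<iota>" and ts: "ts \<in> Tset \<iota>" shows "twist f ts \<in> Smaps \<iota>"
proof -
  have "twist f ts \<in> Emaps \<iota>" using twist_E[OF S_E[OF f] ts] .
  moreover have "twist f ts (\<iota> b * x) = \<iota> b * twist f ts x" for b x
    using f by (simp add: twist_def S_llin mult.assoc sl_const_mult case_prod_unfold)
  ultimately show ?thesis by (simp add: Emaps_def Smaps_def)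
qed

end



lemma relL: "m \<in> M \<Longrightarrow> m' \<in> M \<Longrightarrow> x \<in> N \<Longrightarrow> gen (m + m', x) - gen (m, x) - gen (m', x) \<in> tensor_rels M N D r l"
  unfolding tensor_rels_def by blast
lemma relR: "m \<in> M \<Longrightarrow> x \<in> N \<Longrightarrow> x' \<in> N \<Longrightarrow> gen (m, x + x') - gen (m, x) - gen (m, x') \<in> tensor_rels M N D r l"
  unfolding tensor_rels_def by blast
lemma relB: "m \<in> M \<Longrightarrow> x \<in> N \<Longrightarrow> d \<in> D \<Longrightarrow> gen (r m d, x) - gen (m, l d x) \<in> tensor_rels M N D r l"
  unfolding tensor_rels_def by blast

lemma zeq_map: "(\<And>i. i \<in> set I \<Longrightarrow> zeq X Rl [f i] [g i]) \<Longrightarrow> zeq X Rl (map f I) (map g I)"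
  using zeq_concat[of I X Rl "\<lambda>i. [f i]" "\<lambda>i. [g i]"] by (simp add: map_concat[symmetric] concat_map_singleton)

lemma zeq_singletons: "set xs \<subseteq> X \<Longrightarrow> (\<And>x. x \<in> set xs \<Longrightarrow> zeq X Rl [x] (N x)) \<Longrightarrow> zeq X Rl xs (concat (map N xs))"
  using zeq_concat[of xs X Rl "\<lambda>x. [x]" N] by (simp add: concat_map_singleton)

definition Iidx :: "nat \<Rightarrow> (nat \<Rightarrow> ('a \<times> 'a) list) \<Rightarrow> (nat \<times> 'a \<times> 'a) list" where
  "Iidx n t = concat (map (\<lambda>k. map (\<lambda>p. (k, p)) (t k)) [0..<n])"

lemma sum_Iidx: "(\<Sum>p\<leftarrow>Iidx n t. h p) = (\<Sum>k\<leftarrow>[0..<n]. \<Sum>q\<leftarrow>t k. h (k, q))"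
  by (simp add: Iidx_def sum_list_map_concat o_def)

lemma set_Iidx: "p \<in> set (Iidx n t) \<Longrightarrow> fst p < n"
  by (auto simp: Iidx_def)

definition PhiF :: "(('a::ring_1 \<Rightarrow> 'a) \<times> ('a \<Rightarrow> 'a)) list \<Rightarrow> 'a \<Rightarrow> 'a \<Rightarrow> 'a" where
  "PhiF xs = (\<lambda>x y. \<Sum>p\<leftarrow>xs. fst p (snd p x * y))"

definition PhiInv where
  "PhiInv n \<beta> t F = map (\<lambda>p. (F (fst (snd p)), lam (snd (snd p)) \<circ> \<beta> (fst p))) (Iidx n t)"

abbreviation "teqE \<iota> \<equiv> teq (Emaps \<iota>) (Emaps \<iota>) (range lam) (\<circ>) (\<circ>)"

lemma PhiF_append: "PhiF (xs @ ys) = PhiF xs + PhiF ys"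
  by (simp add: PhiF_def fun_eq_iff)

lemma P1: "teqE \<iota> xs ys \<Longrightarrow> PhiF xs = PhiF ys"
proof -
  assume a: "teqE \<iota> xs ys"
  have "sum_list (map (\<lambda>p. fst p (snd p x * y)) xs) = sum_list (map (\<lambda>p. fst p (snd p x * y)) ys)" for x y
    by (rule teq_sum_eq[OF a]) (auto simp: E_add distrib_right mult.assoc)
  then show ?thesis by (simp add: PhiF_def fun_eq_iff)
qed

lemma good_Phi: "set xs \<subseteq> Emaps \<iota> \<times> Emaps \<iota> \<Longrightarrow> good \<iota> (PhiF xs)"
proof -
  assume xs: "set xs \<subseteq> Emaps \<iota> \<times> Emaps \<iota>"
  have "PhiF xs (x + x') y = PhiF xs x y + PhiF xs x' y" for x x' y
    unfolding PhiF_def sum_list_addf[symmetric]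
    by (rule sl_cong) (use xs in \<open>auto simp: E_add distrib_right\<close>)
  moreover have "PhiF xs x (y + y') = PhiF xs x y + PhiF xs x y'" for x y y'
    unfolding PhiF_def sum_list_addf[symmetric]
    by (rule sl_cong) (use xs in \<open>auto simp: E_add distrib_left\<close>)
  moreover have "PhiF xs (x * \<iota> b) y = PhiF xs x (\<iota> b * y)" for x y b
    unfolding PhiF_def
    by (rule sl_cong) (use xs in \<open>auto simp: E_rlin mult.assoc\<close>)
  moreover have "PhiF xs x (y * \<iota> b) = PhiF xs x y * \<iota> b" for x y b
    unfolding PhiF_def sl_mult_const
    by (rule sl_cong) (use xs in \<open>auto simp: E_rlin mult.assoc[symmetric]\<close>)
  ultimately show ?thesis by (simp add: good_def)
qed

lemma good_E: "good \<iota> F \<Longrightarrow> F y \<in> Emaps \<iota>"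
  by (rule EmapsI) (simp_all add: good_def)

context qb begin

lemma F1: "e \<in> Emaps \<iota> \<Longrightarrow> e x = (\<Sum>k\<leftarrow>[0..<n]. \<Sum>(y, z)\<leftarrow>t k. e y * z * \<beta> k x)"
proof -
  assume e: "e \<in> Emaps \<iota>"
  have "(\<lambda>p q. e p * q) x 1 = (\<Sum>i\<leftarrow>[0..<n]. \<Sum>(y, z)\<leftarrow>t i. (\<lambda>p q. e p * q) y (z * (\<beta> i x * 1)))"
    by (rule Q) (use e in \<open>auto simp: E_add E_rlin algebra_simps\<close>)
  then show ?thesis by (simp add: mult.assoc)
qed

lemma K3: "good \<iota> F \<Longrightarrow> PhiF (PhiInv n \<beta> t F) = F"
proof (rule ext, rule ext)
  fix x u
  assume g: "good \<iota> F"
  have "PhiF (PhiInv n \<beta> t F) x u = (\<Sum>i\<leftarrow>[0..<n]. \<Sum>(y, z)\<leftarrow>t i. F y (z * (\<beta> i x * u)))"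
    by (simp add: PhiF_def PhiInv_def sum_Iidx o_def case_prod_unfold mult.assoc)
  also have "\<dots> = F x u"
    by (rule Q[symmetric]) (use g in \<open>auto simp: good_def\<close>)
  finally show "PhiF (PhiInv n \<beta> t F) x u = F x u" .
qed

lemma PhiInv_E: "good \<iota> F \<Longrightarrow> set (PhiInv n \<beta> t F) \<subseteq> Emaps \<iota> \<times> Emaps \<iota>"
proof -
  assume g: "good \<iota> F"
  have "lam (snd (snd p)) \<circ> \<beta> (fst p) \<in> Emaps \<iota>" if "p \<in> set (Iidx n t)" for p
    using set_Iidx[OF that] by (intro E_comp E_lam S_E beta_S)
  then show ?thesis by (auto simp: PhiInv_def good_E[OF g])
qed

lemma P2:
  assumes xs: "set xs \<subseteq> Emaps \<iota> \<times> Emaps \<iota>"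
  shows "teqE \<iota> xs (PhiInv n \<beta> t (PhiF xs))"
proof -
  let ?X = "Emaps \<iota> \<times> Emaps \<iota>" and ?Rl = "tensor_rels (Emaps \<iota>) (Emaps \<iota>) (range lam) (\<circ>) (\<circ>)"
  let ?I = "Iidx n t"
  define N :: "('a \<Rightarrow> 'a) \<times> ('a \<Rightarrow> 'a) \<Rightarrow> (('a \<Rightarrow> 'a) \<times> ('a \<Rightarrow> 'a)) list" where "N = (\<lambda>q. map (\<lambda>p. (fst q \<circ> lam (snd q (fst (snd p))), lam (snd (snd p)) \<circ> \<beta> (fst p))) ?I)"
  have w: "lam (snd (snd p)) \<circ> \<beta> (fst p) \<in> Emaps \<iota>" if "p \<in> set ?I" for p
    using set_Iidx[OF that] by (intro E_comp E_lam S_E beta_S)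
  have step_a: "zeq ?X ?Rl [q] (N q)" if q: "q \<in> ?X" for q
  proof -
    obtain e e' where qq: "q = (e, e')" and e: "e \<in> Emaps \<iota>" and e': "e' \<in> Emaps \<iota>" using q by auto
    let ?w = "\<lambda>p. lam (e' (fst (snd p)) * snd (snd p)) \<circ> \<beta> (fst p)"
    have wE: "?w p \<in> Emaps \<iota>" if "p \<in> set ?I" for p
      using set_Iidx[OF that] by (intro E_comp E_lam S_E beta_S)
    have sum: "e' = (\<Sum>p\<leftarrow>?I. ?w p)"
      by (rule ext) (subst F1[OF e'], simp add: sl_apply sum_Iidx case_prod_unfold)
    have 1: "zeq ?X ?Rl [(e, sum_list (map ?w ?I))] (map (\<lambda>v. (e, v)) (map ?w ?I))"
      by (rule zeq_split[where V="Emaps \<iota>"]) (use e wE in \<open>auto intro: relR E_plus E_0\<close>)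
    have 2: "zeq ?X ?Rl (map (\<lambda>p. (e, ?w p)) ?I) (N q)"
      unfolding N_def qq
    proof (rule zeq_map)
      fix p assume p: "p \<in> set ?I"
      have "zeq ?X ?Rl [(e \<circ> lam (e' (fst (snd p))), lam (snd (snd p)) \<circ> \<beta> (fst p))]
                       [(e, lam (e' (fst (snd p))) \<circ> (lam (snd (snd p)) \<circ> \<beta> (fst p)))]"
        by (rule zeq_rel2) (use e w[OF p] in \<open>auto intro!: relB E_comp E_lam\<close>)
      then show "zeq ?X ?Rl [(e, ?w p)] [(fst (e, e') \<circ> lam (snd (e, e') (fst (snd p))), lam (snd (snd p)) \<circ> \<beta> (fst p))]"
        by (simp add: zeq_sym lam_mult o_assoc)
    qed
    show ?thesis using zeq_trans[OF 1] 2 sum qq by (simp add: o_def)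
  qed
  have b: "zeq ?X ?Rl xs (concat (map N xs))"
    by (rule zeq_singletons[OF xs step_a]) (use xs in auto)
  have c: "zeq ?X ?Rl (concat (map (\<lambda>q. map (\<lambda>p. (\<lambda>v. (v, lam (snd (snd p)) \<circ> \<beta> (fst p))) (fst q \<circ> lam (snd q (fst (snd p))))) ?I) xs))
            (map (\<lambda>p. (\<lambda>v. (v, lam (snd (snd p)) \<circ> \<beta> (fst p))) (\<Sum>q\<leftarrow>xs. fst q \<circ> lam (snd q (fst (snd p))))) ?I)"
    apply (rule zeq_regroup[where V="Emaps \<iota>"])
    subgoal using w by blast
    subgoal for p u v by (rule relL[OF _ _ w]) 
    subgoal by (rule E_plus)
    subgoal by (rule E_0)
    subgoal for q p using xs by (intro E_comp E_lam) auto
    done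
  have d: "(\<Sum>q\<leftarrow>xs. fst q \<circ> lam (snd q y)) = PhiF xs y" for y
    by (simp add: PhiF_def fun_eq_iff sl_apply)
  show ?thesis
    unfolding teq_zeq using zeq_trans[OF b] c d by (simp add: N_def PhiInv_def)
qed

lemma Phi_char:
  assumes "set xs \<subseteq> Emaps \<iota> \<times> Emaps \<iota>" "set ys \<subseteq> Emaps \<iota> \<times> Emaps \<iota>"
  shows "teqE \<iota> xs ys \<longleftrightarrow> PhiF xs = PhiF ys"
proof
  assume "PhiF xs = PhiF ys"
  then have "zeq (Emaps \<iota> \<times> Emaps \<iota>) (tensor_rels (Emaps \<iota>) (Emaps \<iota>) (range lam) (\<circ>) (\<circ>)) ys (PhiInv n \<beta> t (PhiF xs))"
    using P2[OF assms(2)] unfolding teq_zeq by simp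
  then show "teqE \<iota> xs ys" using P2[OF assms(1)]
    unfolding teq_zeq using zeq_trans zeq_sym by blast
qed (rule P1)

end



abbreviation "teqH \<iota> \<equiv> teq (Smaps \<iota>) (Emaps \<iota>) (centralizer \<iota>) (\<lambda>h r. lam r \<circ> h) (\<lambda>r x. rho r \<circ> x)"

definition PsiF :: "(('a::ring_1 \<Rightarrow> 'a) \<times> ('a \<Rightarrow> 'a)) list \<Rightarrow> 'a \<Rightarrow> 'a \<Rightarrow> 'a" where
  "PsiF zs = (\<lambda>x y. \<Sum>p\<leftarrow>zs. snd p x * fst p y)"

definition rk :: "('a::ring_1 \<Rightarrow> 'a) \<Rightarrow> ('a \<times> 'a) list \<Rightarrow> 'a" where
  "rk \<alpha> ts = (\<Sum>(y, z)\<leftarrow>ts. \<alpha> y * z)"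

definition PsiInv where
  "PsiInv n \<beta> t G = map (\<lambda>k. (\<beta> k, colE G (t k))) [0..<n]"

lemma P3: "teqH \<iota> zs ws \<Longrightarrow> PsiF zs = PsiF ws"
proof -
  assume a: "teqH \<iota> zs ws"
  have "sum_list (map (\<lambda>p. snd p x * fst p y) zs) = sum_list (map (\<lambda>p. snd p x * fst p y) ws)" for x y
    by (rule teq_sum_eq[OF a]) (auto simp: distrib_left distrib_right mult.assoc)
  then show ?thesis by (simp add: PsiF_def fun_eq_iff)
qed

lemma PsiF_append: "PsiF (xs @ ys) = PsiF xs + PsiF ys"
  by (simp add: PsiF_def fun_eq_iff)

lemma good_Psi: "set zs \<subseteq> Smaps \<iota> \<times> Emaps \<iota> \<Longrightarrow> good \<iota> (PsiF zs)"
proof -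
  assume zs: "set zs \<subseteq> Smaps \<iota> \<times> Emaps \<iota>"
  have "PsiF zs (x + x') y = PsiF zs x y + PsiF zs x' y" for x x' y
    unfolding PsiF_def sum_list_addf[symmetric]
    by (rule sl_cong) (use zs in \<open>auto simp: E_add distrib_right\<close>)
  moreover have "PsiF zs x (y + y') = PsiF zs x y + PsiF zs x y'" for x y y'
    unfolding PsiF_def sum_list_addf[symmetric]
    by (rule sl_cong) (use zs in \<open>auto simp: S_E[THEN E_add] distrib_left\<close>)
  moreover have "PsiF zs (x * \<iota> b) y = PsiF zs x (\<iota> b * y)" for x y b
    unfolding PsiF_def
    by (rule sl_cong) (use zs in \<open>auto simp: E_rlin S_llin mult.assoc\<close>)
  moreover have "PsiF zs x (y * \<iota> b) = PsiF zs x y * \<iota> b" for x y b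
    unfolding PsiF_def sl_mult_const
    by (rule sl_cong) (use zs in \<open>auto simp: S_E[THEN E_rlin] mult.assoc\<close>)
  ultimately show ?thesis by (simp add: good_def)
qed

context qb begin

lemma PsiInv_SE: "good \<iota> G \<Longrightarrow> set (PsiInv n \<beta> t G) \<subseteq> Smaps \<iota> \<times> Emaps \<iota>"
  by (auto simp: PsiInv_def beta_S t_T colE_E)

lemma rk_R: "\<alpha> \<in> Smaps \<iota> \<Longrightarrow> k < n \<Longrightarrow> rk \<alpha> (t k) \<in> centralizer \<iota>"
proof -
  assume a: "\<alpha> \<in> Smaps \<iota>" and k: "k < n"
  have "(\<Sum>(y, z)\<leftarrow>t k. (\<lambda>p q. \<alpha> p * q) (\<iota> b * y) z) = (\<Sum>(y, z)\<leftarrow>t k. (\<lambda>p q. \<alpha> p * q) y (z * \<iota> b))" for b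
    by (rule Tprop[OF t_T[OF k]]) (use a in \<open>auto simp: S_E[THEN E_add] S_E[THEN E_rlin] algebra_simps\<close>)
  then have "rk \<alpha> (t k) * \<iota> b = \<iota> b * rk \<alpha> (t k)" for b
    using a by (simp add: rk_def sl_mult_const sl_const_mult case_prod_unfold S_llin mult.assoc)
  then show ?thesis by (simp add: centralizer_def)
qed

lemma S_decomp: "\<alpha> \<in> Smaps \<iota> \<Longrightarrow> \<alpha> = (\<Sum>k\<leftarrow>[0..<n]. lam (rk \<alpha> (t k)) \<circ> \<beta> k)"
proof (rule ext)
  fix x assume a: "\<alpha> \<in> Smaps \<iota>"
  have "\<alpha> x = (\<Sum>k\<leftarrow>[0..<n]. \<Sum>(y, z)\<leftarrow>t k. \<alpha> y * z * \<beta> k x)" by (rule F1[OF S_E[OF a]])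
  also have "\<dots> = (\<Sum>k\<leftarrow>[0..<n]. lam (rk \<alpha> (t k)) \<circ> \<beta> k) x"
    by (simp add: sl_apply rk_def sl_mult_const case_prod_unfold)
  finally show "\<alpha> x = (\<Sum>k\<leftarrow>[0..<n]. lam (rk \<alpha> (t k)) \<circ> \<beta> k) x" .
qed

lemma P4:
  assumes zs: "set zs \<subseteq> Smaps \<iota> \<times> Emaps \<iota>"
  shows "teqH \<iota> zs (PsiInv n \<beta> t (PsiF zs))"
proof -
  let ?X = "Smaps \<iota> \<times> Emaps \<iota>" and ?Rl = "tensor_rels (Smaps \<iota>) (Emaps \<iota>) (centralizer \<iota>) (\<lambda>h r. lam r \<circ> h) (\<lambda>r x. rho r \<circ> x)"
  let ?I = "[0..<n]"
  define N :: "('a \<Rightarrow> 'a) \<times> ('a \<Rightarrow> 'a) \<Rightarrow> (('a \<Rightarrow> 'a) \<times> ('a \<Rightarrow> 'a)) list"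
    where "N = (\<lambda>q. map (\<lambda>k. (\<beta> k, rho (rk (fst q) (t k)) \<circ> snd q)) ?I)"
  have step_a: "zeq ?X ?Rl [q] (N q)" if q: "q \<in> ?X" for q
  proof -
    obtain a e where qq: "q = (a, e)" and a: "a \<in> Smaps \<iota>" and e: "e \<in> Emaps \<iota>" using q by auto
    let ?w = "\<lambda>k. lam (rk a (t k)) \<circ> \<beta> k"
    have wS: "?w k \<in> Smaps \<iota>" if "k \<in> set ?I" for k
      using that by (auto intro!: S_comp S_lamR rk_R a beta_S)
    have 1: "zeq ?X ?Rl [(sum_list (map ?w ?I), e)] (map (\<lambda>v. (v, e)) (map ?w ?I))"
      apply (rule zeq_split[where V="Smaps \<iota>"])
      subgoal using e by blast
      subgoal for u v by (rule relL[OF _ _ e])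
      subgoal by (rule S_plus)
      subgoal by (rule S_0)
      subgoal using wS by (auto simp del: set_upt)
      done
    have 2: "zeq ?X ?Rl (map (\<lambda>k. (?w k, e)) ?I) (N q)"
      unfolding N_def qq
    proof (rule zeq_map)
      fix k assume k: "k \<in> set ?I"
      have "zeq ?X ?Rl [((\<lambda>h r. lam r \<circ> h) (\<beta> k) (rk a (t k)), e)] [(\<beta> k, (\<lambda>r x. rho r \<circ> x) (rk a (t k)) e)]"
        apply (rule zeq_rel2)
        subgoal using k by (intro relB beta_S rk_R a e) auto
        subgoal using wS[OF k] e by simp
        subgoal using k e by (auto intro!: beta_S E_comp E_rho rk_R a)
        done
      then show "zeq ?X ?Rl [(?w k, e)] [(\<beta> k, rho (rk (fst (a, e)) (t k)) \<circ> snd (a, e))]"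
        by simp
    qed
    have 3: "[q] = [(sum_list (map ?w ?I), e)]" using S_decomp[OF a] qq by simp
    show ?thesis using zeq_trans[OF 1] 2 3 by (simp add: o_def)
  qed
  have b: "zeq ?X ?Rl zs (concat (map N zs))"
    by (rule zeq_singletons[OF zs step_a]) (use zs in auto)
  have c: "zeq ?X ?Rl (concat (map (\<lambda>q. map (\<lambda>k. (\<lambda>v. (\<beta> k, v)) (rho (rk (fst q) (t k)) \<circ> snd q)) ?I) zs))
            (map (\<lambda>k. (\<lambda>v. (\<beta> k, v)) (\<Sum>q\<leftarrow>zs. rho (rk (fst q) (t k)) \<circ> snd q)) ?I)"
    apply (rule zeq_regroup[where V="Emaps \<iota>"])
    subgoal by (auto intro: beta_S)
    subgoal for k u v by (rule relR) (auto intro: beta_S)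
    subgoal by (rule E_plus)
    subgoal by (rule E_0)
    subgoal for q k using zs by (intro E_comp E_rho rk_R) auto
    done
  have d: "(\<Sum>q\<leftarrow>zs. rho (rk (fst q) (t k)) \<circ> snd q) = colE (PsiF zs) (t k)" for k
  proof (rule ext)
    fix x
    have "(\<Sum>q\<leftarrow>zs. rho (rk (fst q) (t k)) \<circ> snd q) x = (\<Sum>q\<leftarrow>zs. \<Sum>p\<leftarrow>t k. snd q x * fst q (fst p) * snd p)"
      by (simp add: sl_apply rk_def sl_const_mult case_prod_unfold mult.assoc)
    also have "\<dots> = (\<Sum>p\<leftarrow>t k. \<Sum>q\<leftarrow>zs. snd q x * fst q (fst p) * snd p)" by (rule sl_swap)
    also have "\<dots> = colE (PsiF zs) (t k) x"
      by (simp add: colE_def PsiF_def sl_mult_const case_prod_unfold)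
    finally show "(\<Sum>q\<leftarrow>zs. rho (rk (fst q) (t k)) \<circ> snd q) x = colE (PsiF zs) (t k) x" .
  qed
  show ?thesis
    unfolding teq_zeq using zeq_trans[OF b] c d by (simp add: N_def PsiInv_def)
qed

lemma Psi_char:
  assumes "set xs \<subseteq> Smaps \<iota> \<times> Emaps \<iota>" "set ys \<subseteq> Smaps \<iota> \<times> Emaps \<iota>"
  shows "teqH \<iota> xs ys \<longleftrightarrow> PsiF xs = PsiF ys"
proof
  assume "PsiF xs = PsiF ys"
  then have "zeq (Smaps \<iota> \<times> Emaps \<iota>) (tensor_rels (Smaps \<iota>) (Emaps \<iota>) (centralizer \<iota>) (\<lambda>h r. lam r \<circ> h) (\<lambda>r x. rho r \<circ> x)) ys (PsiInv n \<beta> t (PsiF xs))"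
    using P4[OF assms(2)] unfolding teq_zeq by simp
  then show "teqH \<iota> xs ys" using P4[OF assms(1)]
    unfolding teq_zeq using zeq_trans zeq_sym by blast
qed (rule P3)

lemma Psi_PsiInv: "good \<iota> G \<Longrightarrow> PsiF (PsiInv n \<beta> t G) = G"
proof (rule ext, rule ext)
  fix x u assume g: "good \<iota> G"
  have "PsiF (PsiInv n \<beta> t G) x u = (\<Sum>i\<leftarrow>[0..<n]. colE G (t i) x * \<beta> i u)"
    by (simp add: PsiF_def PsiInv_def o_def)
  also have "\<dots> = G x u" by (rule K2[OF g])
  finally show "PsiF (PsiInv n \<beta> t G) x u = G x u" .
qed

end



abbreviation "teqT \<iota> \<equiv> teq3 (Smaps \<iota>) (Smaps \<iota>) (Emaps \<iota>) (centralizer \<iota>) (\<lambda>h r. lam r \<circ> h) (\<lambda>r h. rho r \<circ> h) (\<lambda>h r. lam r \<circ> h) (\<lambda>r x. rho r \<circ> x)"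

definition Psi3F :: "(('a::ring_1 \<Rightarrow> 'a) \<times> ('a \<Rightarrow> 'a) \<times> ('a \<Rightarrow> 'a)) list \<Rightarrow> 'a \<Rightarrow> 'a \<Rightarrow> 'a \<Rightarrow> 'a" where
  "Psi3F ws = (\<lambda>x y w. \<Sum>p\<leftarrow>ws. snd (snd p) x * fst (snd p) y * fst p w)"

definition Jidx :: "nat \<Rightarrow> (nat \<times> nat) list" where
  "Jidx n = concat (map (\<lambda>k. map (\<lambda>m. (k, m)) [0..<n]) [0..<n])"

definition Psi3Inv where
  "Psi3Inv n \<beta> t G = map (\<lambda>km. (\<beta> (fst km), \<beta> (snd km),
      \<lambda>x. \<Sum>p'\<leftarrow>t (snd km). \<Sum>p\<leftarrow>t (fst km). G x (fst p') (fst p) * snd p * snd p')) (Jidx n)"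

lemma rel3_1: "a \<in> M1 \<Longrightarrow> a' \<in> M1 \<Longrightarrow> b \<in> M2 \<Longrightarrow> c \<in> M3 \<Longrightarrow>
  gen (a + a', b, c) - gen (a, b, c) - gen (a', b, c) \<in> tensor3_rels M1 M2 M3 D r1 l2 r2 l3"
  unfolding tensor3_rels_def by blast
lemma rel3_2: "a \<in> M1 \<Longrightarrow> b \<in> M2 \<Longrightarrow> b' \<in> M2 \<Longrightarrow> c \<in> M3 \<Longrightarrow>
  gen (a, b + b', c) - gen (a, b, c) - gen (a, b', c) \<in> tensor3_rels M1 M2 M3 D r1 l2 r2 l3"
  unfolding tensor3_rels_def by blast
lemma rel3_3: "a \<in> M1 \<Longrightarrow> b \<in> M2 \<Longrightarrow> c \<in> M3 \<Longrightarrow> c' \<in> M3 \<Longrightarrow>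
  gen (a, b, c + c') - gen (a, b, c) - gen (a, b, c') \<in> tensor3_rels M1 M2 M3 D r1 l2 r2 l3"
  unfolding tensor3_rels_def by blast
lemma rel3_4: "a \<in> M1 \<Longrightarrow> b \<in> M2 \<Longrightarrow> c \<in> M3 \<Longrightarrow> d \<in> D \<Longrightarrow>
  gen (r1 a d, b, c) - gen (a, l2 d b, c) \<in> tensor3_rels M1 M2 M3 D r1 l2 r2 l3"
  unfolding tensor3_rels_def by blast
lemma rel3_5: "a \<in> M1 \<Longrightarrow> b \<in> M2 \<Longrightarrow> c \<in> M3 \<Longrightarrow> d \<in> D \<Longrightarrow>
  gen (a, r2 b d, c) - gen (a, b, l3 d c) \<in> tensor3_rels M1 M2 M3 D r1 l2 r2 l3"
  unfolding tensor3_rels_def by blast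

lemma P5: "teqT \<iota> ws vs \<Longrightarrow> Psi3F ws = Psi3F vs"
proof -
  assume a: "teqT \<iota> ws vs"
  have "sum_list (map (\<lambda>p. snd (snd p) x * fst (snd p) y * fst p w) ws) = sum_list (map (\<lambda>p. snd (snd p) x * fst (snd p) y * fst p w) vs)" for x y w
    by (rule teq3_sum_eq[OF a]) (auto simp: distrib_left distrib_right mult.assoc)
  then show ?thesis by (simp add: Psi3F_def fun_eq_iff)
qed

context qb begin

lemma P6:
  assumes ws: "set ws \<subseteq> Smaps \<iota> \<times> Smaps \<iota> \<times> Emaps \<iota>"
  shows "teqT \<iota> ws (Psi3Inv n \<beta> t (Psi3F ws))"
proof -
  let ?X = "Smaps \<iota> \<times> Smaps \<iota> \<times> Emaps \<iota>"
    and ?Rl = "tensor3_rels (Smaps \<iota>) (Smaps \<iota>) (Emaps \<iota>) (centralizer \<iota>) (\<lambda>h r. lam r \<circ> h) (\<lambda>r h. rho r \<circ> h) (\<lambda>h r. lam r \<circ> h) (\<lambda>r x. rho r \<circ> x)"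
  let ?I = "[0..<n]"
  define cc :: "('a \<Rightarrow> 'a) \<times> ('a \<Rightarrow> 'a) \<times> ('a \<Rightarrow> 'a) \<Rightarrow> nat \<times> nat \<Rightarrow> 'a \<Rightarrow> 'a"
    where "cc = (\<lambda>q km. rho (rk (rho (rk (fst q) (t (fst km))) \<circ> fst (snd q)) (t (snd km))) \<circ> snd (snd q))"
  define N :: "('a \<Rightarrow> 'a) \<times> ('a \<Rightarrow> 'a) \<times> ('a \<Rightarrow> 'a) \<Rightarrow> (('a \<Rightarrow> 'a) \<times> ('a \<Rightarrow> 'a) \<times> ('a \<Rightarrow> 'a)) list"
    where "N = (\<lambda>q. map (\<lambda>km. (\<beta> (fst km), \<beta> (snd km), cc q km)) (Jidx n))"
  have step_a: "zeq ?X ?Rl [q] (N q)" if q: "q \<in> ?X" for q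
  proof -
    obtain a h c where qq: "q = (a, h, c)" and a: "a \<in> Smaps \<iota>" and h: "h \<in> Smaps \<iota>" and c: "c \<in> Emaps \<iota>"
      using q by auto
    let ?w = "\<lambda>k. lam (rk a (t k)) \<circ> \<beta> k"
    have wS: "?w k \<in> Smaps \<iota>" if "k \<in> set ?I" for k
      using that by (auto intro!: S_comp S_lamR rk_R a beta_S)
    have hk: "rho (rk a (t k)) \<circ> h \<in> Smaps \<iota>" if "k \<in> set ?I" for k
      using that by (auto intro!: S_comp S_rhoR rk_R a h)
    have 1: "zeq ?X ?Rl [(sum_list (map ?w ?I), h, c)] (map (\<lambda>v. (v, h, c)) (map ?w ?I))"
      apply (rule zeq_split[where V="Smaps \<iota>"])
      subgoal using h c by blast
      subgoal for u v by (rule rel3_1[OF _ _ h c])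
      subgoal by (rule S_plus)
      subgoal by (rule S_0)
      subgoal using wS by (auto simp del: set_upt)
      done
    have 2: "zeq ?X ?Rl (map (\<lambda>k. (?w k, h, c)) ?I) (map (\<lambda>k. (\<beta> k, rho (rk a (t k)) \<circ> h, c)) ?I)"
    proof (rule zeq_map)
      fix k assume k: "k \<in> set ?I"
      have "zeq ?X ?Rl [((\<lambda>h r. lam r \<circ> h) (\<beta> k) (rk a (t k)), h, c)] [(\<beta> k, (\<lambda>r h. rho r \<circ> h) (rk a (t k)) h, c)]"
        apply (rule zeq_rel2)
        subgoal using k by (intro rel3_4 beta_S rk_R a h c) auto
        subgoal using wS[OF k] h c by simp
        subgoal using k hk[OF k] c by (auto intro!: beta_S)
        done
      then show "zeq ?X ?Rl [(?w k, h, c)] [(\<beta> k, rho (rk a (t k)) \<circ> h, c)]" by simp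
    qed
    have 3: "zeq ?X ?Rl [(\<beta> k, h', c)] (map (\<lambda>m. (\<beta> k, \<beta> m, rho (rk h' (t m)) \<circ> c)) ?I)"
      if k: "k < n" and h': "h' \<in> Smaps \<iota>" for k h'
    proof -
      let ?w' = "\<lambda>m. lam (rk h' (t m)) \<circ> \<beta> m"
      have wS': "?w' m \<in> Smaps \<iota>" if "m \<in> set ?I" for m
        using that by (auto intro!: S_comp S_lamR rk_R h' beta_S)
      have 31: "zeq ?X ?Rl [(\<beta> k, sum_list (map ?w' ?I), c)] (map (\<lambda>v. (\<beta> k, v, c)) (map ?w' ?I))"
        apply (rule zeq_split[where V="Smaps \<iota>"])
        subgoal using c k beta_S by blast
        subgoal for u v by (rule rel3_2[OF beta_S[OF k] _ _ c])
        subgoal by (rule S_plus)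
        subgoal by (rule S_0)
        subgoal using wS' by (auto simp del: set_upt)
        done
      have 32: "zeq ?X ?Rl (map (\<lambda>m. (\<beta> k, ?w' m, c)) ?I) (map (\<lambda>m. (\<beta> k, \<beta> m, rho (rk h' (t m)) \<circ> c)) ?I)"
      proof (rule zeq_map)
        fix m assume m: "m \<in> set ?I"
        have "zeq ?X ?Rl [(\<beta> k, (\<lambda>h r. lam r \<circ> h) (\<beta> m) (rk h' (t m)), c)] [(\<beta> k, \<beta> m, (\<lambda>r x. rho r \<circ> x) (rk h' (t m)) c)]"
          apply (rule zeq_rel2)
          subgoal using k m by (intro rel3_5 beta_S rk_R h' c) auto
          subgoal using wS'[OF m] k c by (simp add: beta_S)
          subgoal using k m c by (auto intro!: beta_S E_comp E_rho rk_R h')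
          done
        then show "zeq ?X ?Rl [(\<beta> k, ?w' m, c)] [(\<beta> k, \<beta> m, rho (rk h' (t m)) \<circ> c)]" by simp
      qed
      have 33: "h' = sum_list (map ?w' ?I)" using S_decomp[OF h'] by simp
      show ?thesis using zeq_trans[OF 31] 32 33 by (simp add: o_def)
    qed
    have 4: "zeq ?X ?Rl (map (\<lambda>k. (\<beta> k, rho (rk a (t k)) \<circ> h, c)) ?I)
       (concat (map (\<lambda>k. map (\<lambda>m. (\<beta> k, \<beta> m, rho (rk (rho (rk a (t k)) \<circ> h) (t m)) \<circ> c)) ?I) ?I))"
      using zeq_concat[of ?I ?X ?Rl "\<lambda>k. [(\<beta> k, rho (rk a (t k)) \<circ> h, c)]"
          "\<lambda>k. map (\<lambda>m. (\<beta> k, \<beta> m, rho (rk (rho (rk a (t k)) \<circ> h) (t m)) \<circ> c)) ?I"] 3 hk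
      by (simp add: concat_map_singleton)
    have 5: "N q = concat (map (\<lambda>k. map (\<lambda>m. (\<beta> k, \<beta> m, rho (rk (rho (rk a (t k)) \<circ> h) (t m)) \<circ> c)) ?I) ?I)"
      by (simp add: N_def Jidx_def cc_def qq map_concat o_def)
    have 6: "[q] = [(sum_list (map ?w ?I), h, c)]" using S_decomp[OF a] qq by simp
    show ?thesis using zeq_trans[OF zeq_trans[OF 1] 4] 2 5 6 by (simp add: o_def)
  qed
  have b: "zeq ?X ?Rl ws (concat (map N ws))"
    by (rule zeq_singletons[OF ws step_a]) (use ws in auto)
  have J: "km \<in> set (Jidx n) \<Longrightarrow> fst km < n \<and> snd km < n" for km by (auto simp: Jidx_def)
  have c: "zeq ?X ?Rl (concat (map (\<lambda>q. map (\<lambda>km. (\<lambda>v. (\<beta> (fst km), \<beta> (snd km), v)) (cc q km)) (Jidx n)) ws))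
            (map (\<lambda>km. (\<lambda>v. (\<beta> (fst km), \<beta> (snd km), v)) (\<Sum>q\<leftarrow>ws. cc q km)) (Jidx n))"
    apply (rule zeq_regroup[where V="Emaps \<iota>"])
    subgoal for km using J[of km] by (auto intro: beta_S)
    subgoal for km u v using J[of km] by (intro rel3_3 beta_S) auto
    subgoal by (rule E_plus)
    subgoal by (rule E_0)
    subgoal for q km using ws J[of km] unfolding cc_def by (intro E_comp E_rho rk_R S_comp S_rhoR) auto
    done
  have d: "(\<Sum>q\<leftarrow>ws. cc q km) = (\<lambda>x. \<Sum>p'\<leftarrow>t (snd km). \<Sum>p\<leftarrow>t (fst km). Psi3F ws x (fst p') (fst p) * snd p * snd p')" for km
  proof (rule ext)
    fix x
    have "(\<Sum>q\<leftarrow>ws. cc q km) x = (\<Sum>q\<leftarrow>ws. \<Sum>p'\<leftarrow>t (snd km). \<Sum>p\<leftarrow>t (fst km).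
            snd (snd q) x * fst (snd q) (fst p') * fst q (fst p) * snd p * snd p')"
      by (simp add: cc_def sl_apply rk_def sl_const_mult sl_mult_const case_prod_unfold mult.assoc)
    also have "\<dots> = (\<Sum>p'\<leftarrow>t (snd km). \<Sum>q\<leftarrow>ws. \<Sum>p\<leftarrow>t (fst km).
            snd (snd q) x * fst (snd q) (fst p') * fst q (fst p) * snd p * snd p')" by (rule sl_swap)
    also have "\<dots> = (\<Sum>p'\<leftarrow>t (snd km). \<Sum>p\<leftarrow>t (fst km). \<Sum>q\<leftarrow>ws.
            snd (snd q) x * fst (snd q) (fst p') * fst q (fst p) * snd p * snd p')"
      by (rule sl_cong) (rule sl_swap)
    also have "\<dots> = (\<Sum>p'\<leftarrow>t (snd km). \<Sum>p\<leftarrow>t (fst km). Psi3F ws x (fst p') (fst p) * snd p * snd p')"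
      by (simp add: Psi3F_def sl_mult_const)
    finally show "(\<Sum>q\<leftarrow>ws. cc q km) x = (\<lambda>x. \<Sum>p'\<leftarrow>t (snd km). \<Sum>p\<leftarrow>t (fst km). Psi3F ws x (fst p') (fst p) * snd p * snd p') x"
      by simp
  qed
  have e: "concat (map N ws) = concat (map (\<lambda>q. map (\<lambda>km. (\<lambda>v. (\<beta> (fst km), \<beta> (snd km), v)) (cc q km)) (Jidx n)) ws)"
    by (simp add: N_def)
  show ?thesis
    unfolding teq3_zeq using zeq_trans[OF b] c d e by (simp add: Psi3Inv_def)
qed

lemma Psi3_char:
  assumes "set xs \<subseteq> Smaps \<iota> \<times> Smaps \<iota> \<times> Emaps \<iota>" "set ys \<subseteq> Smaps \<iota> \<times> Smaps \<iota> \<times> Emaps \<iota>"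
    and "Psi3F xs = Psi3F ys"
  shows "teqT \<iota> xs ys"
proof -
  have "zeq (Smaps \<iota> \<times> Smaps \<iota> \<times> Emaps \<iota>) (tensor3_rels (Smaps \<iota>) (Smaps \<iota>) (Emaps \<iota>) (centralizer \<iota>) (\<lambda>h r. lam r \<circ> h) (\<lambda>r h. rho r \<circ> h) (\<lambda>h r. lam r \<circ> h) (\<lambda>r x. rho r \<circ> x)) ys (Psi3Inv n \<beta> t (Psi3F xs))"
    using P6[OF assms(2)] assms(3) unfolding teq3_zeq by simp
  then show ?thesis using P6[OF assms(1)]
    unfolding teq3_zeq using zeq_trans zeq_sym by blast
qed

end



lemma balanced_E: "left_balanced (Emaps \<iota>) (\<circ>) (range lam)"
  unfolding left_balanced_def
proof (intro allI impI)
  fix \<phi> :: "('a \<Rightarrow> 'a) \<Rightarrow> ('a \<Rightarrow> 'a)"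
  assume a: "(\<forall>c\<in>Emaps \<iota>. \<phi> c \<in> Emaps \<iota>) \<and> additive_on (Emaps \<iota>) \<phi> \<and>
          (\<forall>\<psi>\<in>End_left (Emaps \<iota>) (\<circ>) (range lam). \<forall>c\<in>Emaps \<iota>. \<phi> (\<psi> c) = \<psi> (\<phi> c))"
  show "\<exists>d\<in>range lam. \<forall>c\<in>Emaps \<iota>. \<phi> c = d \<circ> c"
  proof (intro bexI ballI)
    fix c assume c: "c \<in> Emaps \<iota>"
    define \<psi> :: "('a \<Rightarrow> 'a) \<Rightarrow> ('a \<Rightarrow> 'a)" where "\<psi> = (\<lambda>e. lam (e 1) \<circ> c)"
    have "\<psi> \<in> End_left (Emaps \<iota>) (\<circ>) (range lam)"
      unfolding End_left_def additive_on_def \<psi>_def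
      using c by (auto intro!: E_comp E_lam simp: fun_eq_iff distrib_right mult.assoc)
    then have "\<phi> (\<psi> id) = \<psi> (\<phi> id)" using a E_id by blast
    moreover have "\<psi> id = c" by (simp add: \<psi>_def fun_eq_iff)
    ultimately show "\<phi> c = lam (\<phi> id 1) \<circ> c" by (simp add: \<psi>_def)
  qed simp
qed

context qb begin

lemma deltaL_SE: "g \<in> Emaps \<iota> \<Longrightarrow> set (deltaL n \<beta> t g) \<subseteq> Smaps \<iota> \<times> Emaps \<iota>"
  by (auto simp: deltaL_def beta_S twist_E t_T)

lemma Psi_deltaL: "g \<in> Emaps \<iota> \<Longrightarrow> PsiF (deltaL n \<beta> t g) = (\<lambda>x y. g (x * y))"
  by (simp add: PsiF_def deltaL_def o_def I1)

lemma coinv: "coinvariants (Smaps \<iota>) (\<circ>) id lam (centralizer \<iota>) (Emaps \<iota>) (\<circ>) rho (deltaL n \<beta> t) = range lam"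
proof -
  have "c \<in> Emaps \<iota> \<and> teqH \<iota> (deltaL n \<beta> t c) [(id, c)] \<longleftrightarrow> c \<in> range lam" for c
  proof
    assume a: "c \<in> Emaps \<iota> \<and> teqH \<iota> (deltaL n \<beta> t c) [(id, c)]"
    then have "PsiF (deltaL n \<beta> t c) = PsiF [(id, c)]" using P3 by blast
    then have "(\<lambda>x y. c (x * y)) = PsiF [(id, c)]" using a by (simp add: Psi_deltaL)
    then have "c (x * y) = c x * y" for x y by (simp add: PsiF_def fun_eq_iff)
    then have "c = lam (c 1)" by (metis lam_apply mult_1 ext)
    then show "c \<in> range lam" by blast
  next
    assume "c \<in> range lam"
    then obtain a where c: "c = lam a" by blast
    have cE: "c \<in> Emaps \<iota>" using c E_lam by simp
    have "teqH \<iota> (deltaL n \<beta> t c) [(id, c)]"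
      apply (rule Psi_char[THEN iffD2, OF deltaL_SE[OF cE]])
      subgoal using cE S_id by simp
      subgoal unfolding Psi_deltaL[OF cE] by (simp add: PsiF_def c fun_eq_iff mult.assoc)
      done
    then show "c \<in> Emaps \<iota> \<and> teqH \<iota> (deltaL n \<beta> t c) [(id, c)]" using cE by blast
  qed
  then show ?thesis unfolding coinvariants_def teqHC_def by blast
qed

end



context qb begin

lemma cm6: "teqH \<iota> (deltaL n \<beta> t id) [(id, id)]"
  apply (rule Psi_char[THEN iffD2, OF deltaL_SE[OF E_id]])
  subgoal by (simp add: E_id S_id)
  subgoal unfolding Psi_deltaL[OF E_id] by (simp add: PsiF_def fun_eq_iff)
  done

lemma cm7:
  assumes g: "g \<in> Emaps \<iota>" and r: "r \<in> centralizer \<iota>"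
  shows "teqH \<iota> (map (\<lambda>(h, x). (h \<circ> lam r, x)) (deltaL n \<beta> t g)) (map (\<lambda>(h, x). (h, x \<circ> rho r)) (deltaL n \<beta> t g))"
proof (rule Psi_char[THEN iffD2])
  show "set (map (\<lambda>(h, x). (h \<circ> lam r, x)) (deltaL n \<beta> t g)) \<subseteq> Smaps \<iota> \<times> Emaps \<iota>"
    using g r by (auto simp: deltaL_def intro!: S_comp beta_S S_lamR twist_E t_T)
  show "set (map (\<lambda>(h, x). (h, x \<circ> rho r)) (deltaL n \<beta> t g)) \<subseteq> Smaps \<iota> \<times> Emaps \<iota>"
    using g r by (auto simp: deltaL_def intro!: E_comp beta_S E_rho twist_E t_T)
  have "PsiF (map (\<lambda>(h, x). (h \<circ> lam r, x)) (deltaL n \<beta> t g)) x y = g (x * (r * y))" for x y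
    by (simp add: PsiF_def deltaL_def o_def I1[OF g])
  moreover have "PsiF (map (\<lambda>(h, x). (h, x \<circ> rho r)) (deltaL n \<beta> t g)) x y = g (x * r * y)" for x y
    by (simp add: PsiF_def deltaL_def o_def I1[OF g])
  ultimately show "PsiF (map (\<lambda>(h, x). (h \<circ> lam r, x)) (deltaL n \<beta> t g)) = PsiF (map (\<lambda>(h, x). (h, x \<circ> rho r)) (deltaL n \<beta> t g))"
    by (simp add: fun_eq_iff mult.assoc)
qed

lemma cm8:
  assumes g: "g \<in> Emaps \<iota>" and g': "g' \<in> Emaps \<iota>"
  shows "teqH \<iota> (deltaL n \<beta> t (g \<circ> g'))
     (concat (map (\<lambda>(h, x). map (\<lambda>(h', x'). (h \<circ> h', x \<circ> x')) (deltaL n \<beta> t g')) (deltaL n \<beta> t g)))"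
proof (rule Psi_char[THEN iffD2])
  show "set (deltaL n \<beta> t (g \<circ> g')) \<subseteq> Smaps \<iota> \<times> Emaps \<iota>" by (rule deltaL_SE[OF E_comp[OF g g']])
  show "set (concat (map (\<lambda>(h, x). map (\<lambda>(h', x'). (h \<circ> h', x \<circ> x')) (deltaL n \<beta> t g')) (deltaL n \<beta> t g))) \<subseteq> Smaps \<iota> \<times> Emaps \<iota>"
    using g g' by (auto simp: deltaL_def intro!: S_comp E_comp beta_S twist_E t_T)
  have "PsiF (concat (map (\<lambda>(h, x). map (\<lambda>(h', x'). (h \<circ> h', x \<circ> x')) (deltaL n \<beta> t g')) (deltaL n \<beta> t g))) x y
     = (\<Sum>i\<leftarrow>[0..<n]. \<Sum>j\<leftarrow>[0..<n]. twist g (t i) (twist g' (t j) x) * \<beta> i (\<beta> j y))" for x y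
    by (simp add: PsiF_def deltaL_def o_def sum_list_map_concat)
  also have "\<dots> x y = (\<Sum>j\<leftarrow>[0..<n]. \<Sum>i\<leftarrow>[0..<n]. twist g (t i) (twist g' (t j) x) * \<beta> i (\<beta> j y))" for x y
    by (rule sl_swap)
  also have "\<dots> x y = (\<Sum>j\<leftarrow>[0..<n]. g (twist g' (t j) x * \<beta> j y))" for x y
    by (simp add: I1[OF g])
  also have "\<dots> x y = g (g' (x * y))" for x y
    by (simp add: E_sum[OF g, symmetric] I1[OF g'])
  finally show "PsiF (deltaL n \<beta> t (g \<circ> g')) = PsiF (concat (map (\<lambda>(h, x). map (\<lambda>(h', x'). (h \<circ> h', x \<circ> x')) (deltaL n \<beta> t g')) (deltaL n \<beta> t g)))"
    by (simp add: Psi_deltaL[OF E_comp[OF g g']] fun_eq_iff)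
qed

lemma cm9:
  assumes c: "c \<in> Emaps \<iota>"
  shows "teqT \<iota> (concat (map (\<lambda>(h, x). map (\<lambda>(h1, h2). (h1, h2, x)) (Delta_cop n \<beta> t h)) (deltaL n \<beta> t c)))
                 (concat (map (\<lambda>(h, x). map (\<lambda>(h', x'). (h, h', x')) (deltaL n \<beta> t x)) (deltaL n \<beta> t c)))"
proof (rule Psi3_char)
  show "set (concat (map (\<lambda>(h, x). map (\<lambda>(h1, h2). (h1, h2, x)) (Delta_cop n \<beta> t h)) (deltaL n \<beta> t c))) \<subseteq> Smaps \<iota> \<times> Smaps \<iota> \<times> Emaps \<iota>"
    using c by (auto simp: deltaL_def Delta_cop_def intro!: beta_S twist_S twist_E t_T)
  show "set (concat (map (\<lambda>(h, x). map (\<lambda>(h', x'). (h, h', x')) (deltaL n \<beta> t x)) (deltaL n \<beta> t c))) \<subseteq> Smaps \<iota> \<times> Smaps \<iota> \<times> Emaps \<iota>"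
    using c by (auto simp: deltaL_def intro!: beta_S twist_E t_T)
  have 1: "Psi3F (concat (map (\<lambda>(h, x). map (\<lambda>(h1, h2). (h1, h2, x)) (Delta_cop n \<beta> t h)) (deltaL n \<beta> t c))) x y w
     = (\<Sum>i\<leftarrow>[0..<n]. twist c (t i) x * (\<Sum>j\<leftarrow>[0..<n]. twist (\<beta> i) (t j) y * \<beta> j w))" for x y w
    by (simp add: Psi3F_def deltaL_def Delta_cop_def o_def sum_list_map_concat sl_const_mult mult.assoc)
  have 2: "(\<Sum>j\<leftarrow>[0..<n]. twist (\<beta> i) (t j) y * \<beta> j w) = \<beta> i (y * w)" if "i \<in> set [0..<n]" for i y w
    using that by (simp add: I1 S_E beta_S)
  have 3: "Psi3F (concat (map (\<lambda>(h, x). map (\<lambda>(h', x'). (h, h', x')) (deltaL n \<beta> t x)) (deltaL n \<beta> t c))) x y w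
     = (\<Sum>i\<leftarrow>[0..<n]. (\<Sum>j\<leftarrow>[0..<n]. twist (twist c (t i)) (t j) x * \<beta> j y) * \<beta> i w)" for x y w
    by (simp add: Psi3F_def deltaL_def o_def sum_list_map_concat sl_mult_const)
  have 4: "(\<Sum>j\<leftarrow>[0..<n]. twist (twist c (t i)) (t j) x * \<beta> j y) = twist c (t i) (x * y)" if "i \<in> set [0..<n]" for i x y
    using that c by (simp add: I1 twist_E t_T)
  have "Psi3F (concat (map (\<lambda>(h, x). map (\<lambda>(h1, h2). (h1, h2, x)) (Delta_cop n \<beta> t h)) (deltaL n \<beta> t c))) x y w = c (x * y * w)" for x y w
    unfolding 1 using sl_cong[of "[0..<n]", OF arg_cong[where f="\<lambda>z. twist c (t _) x * z", OF 2]]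
    by (simp add: I1[OF c] mult.assoc)
  moreover have "Psi3F (concat (map (\<lambda>(h, x). map (\<lambda>(h', x'). (h, h', x')) (deltaL n \<beta> t x)) (deltaL n \<beta> t c))) x y w = c (x * y * w)" for x y w
    unfolding 3 using sl_cong[of "[0..<n]", OF arg_cong[where f="\<lambda>z. z * \<beta> _ w", OF 4]]
    by (simp add: I1[OF c])
  ultimately show "Psi3F (concat (map (\<lambda>(h, x). map (\<lambda>(h1, h2). (h1, h2, x)) (Delta_cop n \<beta> t h)) (deltaL n \<beta> t c))) =
    Psi3F (concat (map (\<lambda>(h, x). map (\<lambda>(h', x'). (h, h', x')) (deltaL n \<beta> t x)) (deltaL n \<beta> t c)))"
    by (simp add: fun_eq_iff)
qed

lemma cm10: "g \<in> Emaps \<iota> \<Longrightarrow> sum_list (map (\<lambda>(h, x). rho (h 1) \<circ> x) (deltaL n \<beta> t g)) = g"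
  by (simp add: fun_eq_iff sl_apply deltaL_def o_def I1)

lemma comod: "left_comodule_algebra (Smaps \<iota>) (\<circ>) id rho lam (Delta_cop n \<beta> t) (\<lambda>\<alpha>. \<alpha> 1)
         (centralizer \<iota>) (\<lambda>r r'. r' * r) 1 (Emaps \<iota>) (\<circ>) id rho (deltaL n \<beta> t)"
  unfolding left_comodule_algebra_def teqHC_def
proof (intro conjI ballI)
  show "\<And>c. c \<in> Emaps \<iota> \<Longrightarrow> deltaL n \<beta> t c \<in> lists (Smaps \<iota> \<times> Emaps \<iota>)"
    using deltaL_SE by blast
  show "\<And>c. c \<in> Emaps \<iota> \<Longrightarrow> teqT \<iota> (concat (map (\<lambda>(h, x). map (\<lambda>(h1, h2). (h1, h2, x)) (Delta_cop n \<beta> t h)) (deltaL n \<beta> t c)))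
                 (concat (map (\<lambda>(h, x). map (\<lambda>(h', x'). (h, h', x')) (deltaL n \<beta> t x)) (deltaL n \<beta> t c)))"
    by (rule cm9)
qed (auto simp: E_rho cm6 cm7 cm8 cm10 rho_mult fun_eq_iff distrib_left)

end



context qb begin

definition gal where
  "gal = (\<lambda>xs. concat (map (\<lambda>(c, c'). map (\<lambda>(h, x). (h, x \<circ> c')) (deltaL n \<beta> t c)) xs))"

lemma gal_SE: "set xs \<subseteq> Emaps \<iota> \<times> Emaps \<iota> \<Longrightarrow> set (gal xs) \<subseteq> Smaps \<iota> \<times> Emaps \<iota>"
proof -
  assume xs: "set xs \<subseteq> Emaps \<iota> \<times> Emaps \<iota>"
  have "twist a (t i) \<circ> b \<in> Emaps \<iota>" if "(a, b) \<in> set xs" "i < n" for a b i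
    using that xs by (intro E_comp twist_E t_T) auto
  then have "(\<lambda>x. twist a (t i) (b x)) \<in> Emaps \<iota>" if "(a, b) \<in> set xs" "i < n" for a b i
    using that by (simp add: comp_def)
  then show ?thesis by (auto simp: gal_def deltaL_def beta_S)
qed

lemma Psi_gal:
  assumes xs: "set xs \<subseteq> Emaps \<iota> \<times> Emaps \<iota>" shows "PsiF (gal xs) = PhiF xs"
proof (rule ext, rule ext)
  fix x y
  have "PsiF (gal xs) x y = (\<Sum>q\<leftarrow>xs. \<Sum>i\<leftarrow>[0..<n]. twist (fst q) (t i) (snd q x) * \<beta> i y)"
    by (simp add: PsiF_def gal_def deltaL_def sum_list_map_concat o_def case_prod_unfold)
  also have "\<dots> = (\<Sum>q\<leftarrow>xs. fst q (snd q x * y))"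
    by (rule sl_cong) (use xs in \<open>auto simp: I1\<close>)
  finally show "PsiF (gal xs) x y = PhiF xs x y" by (simp add: PhiF_def)
qed

lemma galois: "left_Galois (Smaps \<iota>) (\<circ>) id rho lam (Delta_cop n \<beta> t) (\<lambda>\<alpha>. \<alpha> 1)
         (centralizer \<iota>) (\<lambda>r r'. r' * r) 1
         (Emaps \<iota>) (\<circ>) id rho (deltaL n \<beta> t)"
  unfolding left_Galois_def Let_def coinv teqHC_def gal_def[symmetric]
proof (intro conjI ballI comod)
  fix xs ys assume xs0: "xs \<in> lists (Emaps \<iota> \<times> Emaps \<iota>)" and ys0: "ys \<in> lists (Emaps \<iota> \<times> Emaps \<iota>)"
  have xs: "set xs \<subseteq> Emaps \<iota> \<times> Emaps \<iota>" and ys: "set ys \<subseteq> Emaps \<iota> \<times> Emaps \<iota>" using xs0 ys0 by auto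
  have "teqE \<iota> xs ys \<longleftrightarrow> PhiF xs = PhiF ys" using Phi_char xs ys by auto
  also have "\<dots> \<longleftrightarrow> PsiF (gal xs) = PsiF (gal ys)" using Psi_gal[OF xs] Psi_gal[OF ys] by simp
  also have "\<dots> \<longleftrightarrow> teqH \<iota> (gal xs) (gal ys)" using Psi_char gal_SE xs ys by auto
  finally show "teqE \<iota> xs ys \<longleftrightarrow> teqH \<iota> (gal xs) (gal ys)" .
next
  fix zs assume zs: "zs \<in> lists (Smaps \<iota> \<times> Emaps \<iota>)"
  let ?xs = "PhiInv n \<beta> t (PsiF zs)"
  have g: "good \<iota> (PsiF zs)" using good_Psi zs by auto
  have xs: "set ?xs \<subseteq> Emaps \<iota> \<times> Emaps \<iota>" by (rule PhiInv_E[OF g])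
  have "PsiF (gal ?xs) = PsiF zs" using Psi_gal[OF xs] K3[OF g] by simp
  then have "teqH \<iota> (gal ?xs) zs" using Psi_char gal_SE[OF xs] zs by auto
  then show "\<exists>xs\<in>lists (Emaps \<iota> \<times> Emaps \<iota>). teqH \<iota> (gal xs) zs" using xs by auto
qed

end



definition Gv :: "nat \<Rightarrow> (nat \<Rightarrow> 'a \<Rightarrow> 'a) \<Rightarrow> (nat \<Rightarrow> 'a::ring_1 \<Rightarrow> 'a) \<Rightarrow> 'a \<Rightarrow> 'a \<Rightarrow> 'a" where
  "Gv n \<beta> v = (\<lambda>x u. \<Sum>i\<leftarrow>[0..<n]. v i x * \<beta> i u)"

lemma PhiF_mapL: "PhiF (map (\<lambda>(x, y). (lam a \<circ> x, y)) xs) = (\<lambda>x y. a * PhiF xs x y)"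
  by (simp add: PhiF_def fun_eq_iff o_def case_prod_unfold sl_const_mult)

lemma PhiF_mapR: "PhiF (map (\<lambda>(x, y). (x, y \<circ> c)) xs) = (\<lambda>x y. PhiF xs (c x) y)"
  by (simp add: PhiF_def fun_eq_iff o_def case_prod_unfold)

lemma colE_add: "colE (F + G) ts = colE F ts + colE G ts"
  by (simp add: colE_def fun_eq_iff case_prod_unfold distrib_right sum_list_addf)

lemma Cpow_E: "v \<in> Cpow (Emaps \<iota>) n \<Longrightarrow> i < n \<Longrightarrow> v i \<in> Emaps \<iota>"
  by (simp add: Cpow_def)

context qb begin

lemma good_Gv: "v \<in> Cpow (Emaps \<iota>) n \<Longrightarrow> good \<iota> (Gv n \<beta> v)"
proof -
  assume v: "v \<in> Cpow (Emaps \<iota>) n"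
  have vE: "i \<in> set [0..<n] \<Longrightarrow> v i \<in> Emaps \<iota>" for i using Cpow_E[OF v] by simp
  have bS: "i \<in> set [0..<n] \<Longrightarrow> \<beta> i \<in> Smaps \<iota>" for i using beta_S by simp
  have "Gv n \<beta> v (x + x') y = Gv n \<beta> v x y + Gv n \<beta> v x' y" for x x' y
    unfolding Gv_def sum_list_addf[symmetric]
    by (rule sl_cong) (simp add: E_add[OF Cpow_E[OF v]] distrib_right)
  moreover have "Gv n \<beta> v x (y + y') = Gv n \<beta> v x y + Gv n \<beta> v x y'" for x y y'
    unfolding Gv_def sum_list_addf[symmetric]
    by (rule sl_cong) (simp add: E_add[OF S_E[OF beta_S]] distrib_left)
  moreover have "Gv n \<beta> v (x * \<iota> b) y = Gv n \<beta> v x (\<iota> b * y)" for x y b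
    unfolding Gv_def
    by (rule sl_cong) (simp add: E_rlin[OF Cpow_E[OF v]] S_llin[OF beta_S] mult.assoc)
  moreover have "Gv n \<beta> v x (y * \<iota> b) = Gv n \<beta> v x y * \<iota> b" for x y b
    unfolding Gv_def sl_mult_const
    by (rule sl_cong) (simp add: E_rlin[OF S_E[OF beta_S]] mult.assoc)
  ultimately show ?thesis by (simp add: good_def)
qed

lemma D2_E: "left_D2 (Emaps \<iota>) (\<circ>) (range lam)"
  unfolding left_D2_def
proof (intro exI conjI ballI allI impI)
  let ?E = "Emaps \<iota>"
  define fD :: "(('a \<Rightarrow> 'a) \<times> ('a \<Rightarrow> 'a)) list \<Rightarrow> nat \<Rightarrow> 'a \<Rightarrow> 'a"
    where "fD = (\<lambda>xs i. if i < n then colE (PhiF xs) (t i) else 0)"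
  define gD where "gD = (\<lambda>v. PhiInv n \<beta> t (Gv n \<beta> v))"
  have lists_set: "xs \<in> lists (?E \<times> ?E) \<longleftrightarrow> set xs \<subseteq> ?E \<times> ?E" for xs by auto
  {
    fix xs assume xs: "xs \<in> lists (?E \<times> ?E)"
    show "fD xs \<in> Cpow ?E n"
      using xs by (auto simp: fD_def Cpow_def intro!: colE_E good_Phi t_T)
  }
  {
    fix xs ys assume "xs \<in> lists (?E \<times> ?E)" "ys \<in> lists (?E \<times> ?E)" and tq: "teq ?E ?E (range lam) (\<circ>) (\<circ>) xs ys"
    show "fD xs = fD ys" unfolding fD_def by (simp only: P1[OF tq])
  }
  {
    fix xs ys assume "xs \<in> lists (?E \<times> ?E)" "ys \<in> lists (?E \<times> ?E)"
    show "fD (xs @ ys) = fD xs + fD ys"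
      by (simp add: fD_def fun_eq_iff PhiF_append colE_add)
  }
  {
    fix xs i and d :: "'a \<Rightarrow> 'a" assume "xs \<in> lists (?E \<times> ?E)" "d \<in> range lam" "i < n"
    then obtain a where d: "d = lam a" by blast
    show "fD (map (\<lambda>(x, y). (d \<circ> x, y)) xs) i = d \<circ> fD xs i"
      using \<open>i < n\<close> unfolding fD_def d PhiF_mapL by (simp add: colE_def fun_eq_iff case_prod_unfold sl_const_mult mult.assoc)
  }
  {
    fix xs i and c :: "'a \<Rightarrow> 'a" assume "xs \<in> lists (?E \<times> ?E)" "c \<in> ?E" "i < n"
    show "fD (map (\<lambda>(x, y). (x, y \<circ> c)) xs) i = fD xs i \<circ> c"
      using \<open>i < n\<close> unfolding fD_def PhiF_mapR by (simp add: colE_def fun_eq_iff)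
  }
  {
    fix v assume v: "v \<in> Cpow ?E n"
    show "gD v \<in> lists (?E \<times> ?E)" using PhiInv_E[OF good_Gv[OF v]] unfolding gD_def by blast
  }
  have PhigD: "PhiF (gD v) = Gv n \<beta> v" if "v \<in> Cpow ?E n" for v
    using K3[OF good_Gv[OF that]] by (simp add: gD_def)
  have gDE: "set (gD v) \<subseteq> ?E \<times> ?E" if "v \<in> Cpow ?E n" for v
    using PhiInv_E[OF good_Gv[OF that]] by (simp add: gD_def)
  {
    fix v w assume v: "v \<in> Cpow ?E n" and w: "w \<in> Cpow ?E n"
    have vw: "v + w \<in> Cpow ?E n" using v w by (auto simp: Cpow_def intro: E_plus)
    show "teq ?E ?E (range lam) (\<circ>) (\<circ>) (gD (v + w)) (gD v @ gD w)"
      apply (rule Phi_char[THEN iffD2])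
      subgoal by (rule gDE[OF vw])
      subgoal using gDE[OF v] gDE[OF w] by simp
      subgoal by (simp add: PhiF_append PhigD v w vw) (simp add: Gv_def fun_eq_iff distrib_right sum_list_addf)
      done
  }
  {
    fix v and d :: "'a \<Rightarrow> 'a" assume v: "v \<in> Cpow ?E n" and "d \<in> range lam"
    then obtain a where d: "d = lam a" by blast
    let ?v' = "\<lambda>i. if i < n then d \<circ> v i else 0"
    have v': "?v' \<in> Cpow ?E n" using v by (auto simp: Cpow_def d intro: E_comp E_lam)
    show "teq ?E ?E (range lam) (\<circ>) (\<circ>) (gD ?v') (map (\<lambda>(x, y). (d \<circ> x, y)) (gD v))"
      apply (rule Phi_char[THEN iffD2])
      subgoal by (rule gDE[OF v'])
      subgoal using gDE[OF v] by (auto simp: d intro: E_comp E_lam)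
      subgoal unfolding PhigD[OF v'] unfolding d PhiF_mapL PhigD[OF v] Gv_def fun_eq_iff sl_const_mult
        by (intro allI sl_cong) (simp add: mult.assoc)
      done
  }
  {
    fix v and c :: "'a \<Rightarrow> 'a" assume v: "v \<in> Cpow ?E n" and c: "c \<in> ?E"
    let ?v' = "\<lambda>i. if i < n then v i \<circ> c else 0"
    have v': "?v' \<in> Cpow ?E n" using v c by (auto simp: Cpow_def intro: E_comp)
    show "teq ?E ?E (range lam) (\<circ>) (\<circ>) (gD ?v') (map (\<lambda>(x, y). (x, y \<circ> c)) (gD v))"
      apply (rule Phi_char[THEN iffD2])
      subgoal by (rule gDE[OF v'])
      subgoal using gDE[OF v] c by (auto intro: E_comp)
      subgoal unfolding PhiF_mapR PhigD[OF v'] PhigD[OF v] Gv_def fun_eq_iff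
        by (intro allI sl_cong) simp
      done
  }
  {
    fix xs assume xs0: "xs \<in> lists (?E \<times> ?E)"
    have xs: "set xs \<subseteq> ?E \<times> ?E" using xs0 by auto
    have f: "fD xs \<in> Cpow ?E n"
      using xs by (auto simp: fD_def Cpow_def intro!: colE_E good_Phi t_T)
    show "teq ?E ?E (range lam) (\<circ>) (\<circ>) (gD (fD xs)) xs"
      apply (rule Phi_char[THEN iffD2])
      subgoal by (rule gDE[OF f])
      subgoal by (rule xs)
      subgoal unfolding PhigD[OF f]
      proof (rule ext, rule ext)
        fix x u
        have "Gv n \<beta> (fD xs) x u = (\<Sum>i\<leftarrow>[0..<n]. colE (PhiF xs) (t i) x * \<beta> i u)"
          unfolding Gv_def by (rule sl_cong) (simp add: fD_def)
        also have "\<dots> = PhiF xs x u" by (rule K2[OF good_Phi[OF xs]])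
        finally show "Gv n \<beta> (fD xs) x u = PhiF xs x u" .
      qed
      done
  }
qed

end

theorem corollary5p3:
  fixes \<iota> :: "'b::ring_1 \<Rightarrow> 'a::ring_1"
    and uA :: "'k::comm_ring_1 \<Rightarrow> 'a" and uB :: "'k \<Rightarrow> 'b"
    and n :: nat and \<beta> :: "nat \<Rightarrow> 'a \<Rightarrow> 'a" and t :: "nat \<Rightarrow> ('a \<times> 'a) list"
  assumes "alg_struct uA" and "alg_struct uB" and "unital_hom \<iota>" and "\<forall>k. \<iota> (uB k) = uA k"
    and "left_D2 (UNIV :: 'a set) (*) (range \<iota>)"
    and "left_D2_quasibase \<iota> n \<beta> t"
  shows "left_D2 (Emaps \<iota>) (\<circ>) (range lam)
    \<and> left_balanced (Emaps \<iota>) (\<circ>) (range lam)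
    \<and> left_Galois (Smaps \<iota>) (\<circ>) id rho lam (Delta_cop n \<beta> t) (\<lambda>\<alpha>. \<alpha> 1)
         (centralizer \<iota>) (\<lambda>r r'. r' * r) 1
         (Emaps \<iota>) (\<circ>) id rho (deltaL n \<beta> t)
    \<and> coinvariants (Smaps \<iota>) (\<circ>) id lam (centralizer \<iota>) (Emaps \<iota>) (\<circ>) rho (deltaL n \<beta> t)
        = range lam"
proof -
  interpret qb \<iota> n \<beta> t by unfold_locales (rule assms(6))
  show ?thesis using D2_E balanced_E galois coinv by blast
qed

end
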